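(* Fix positive integers $n_x$ and $N_h$, a scalar $\epsilon_r>0$ and a scalar $\eta>0$. Let $A_j, B, C, C_J, L, \Delta A \in \mathbb{R}^{n_x\times n_x}$ be given, with $B$ invertible, and let $C$ and $C_J$ be invertible. For $K\in\mathbb{R}^{n_x\times n_x}$ define $F_p(K,\delta_j)$, $F_r(K,\delta_j)$, $q(K,\delta_j)$ and $\kappa=F_p(K,\delta_j)F_r(K,\delta_j)^{-1}$ as in the context. Then there is a constant $\mu$ that does not depend on $K$ such that for every $K\in\mathbb{R}^{n_x\times n_x}$ $$q(K,\delta_j)\le \mu\,\bar q(K,\delta_j)^{f},\qquad \bar q(K,\delta_j)\triangleq \eta\|K\|_F^2+\sum_{i=2}^{n_xN_h}\sigma_i(\kappa^{-1}),\qquad f\triangleq n_xN_h-1 .$$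
   Context: Here $\delta_j$ labels one fixed realization of a parametric uncertainty. $A_j$ is the plant system matrix under $\delta_j$, $B$ is the input matrix, $C$ the measurement matrix, $C_J$ the performance output matrix, $L$ an observer gain, $\Delta A$ a given matrix (the uncertainty perturbation of the system matrix), and $K$ the feedback controller. Set $A_{x,j}\triangleq A_j+BKC$ and $A_{e,j}\triangleq A_j-LC$. For $\upsilon\in\{x,e\}$, $F_{\upsilon a}\in\mathbb{R}^{n_xN_h\times n_xN_h}$ is the block lower-triangular matrix whose $(k,l)$ block ($k,l=1,\dots,N_h$, blocks of size $n_x\times n_x$) is $A_{\upsilon,j}^{k-l}B$ for $k\ge l$ and $0$ for $k<l$. In particular $F_{xa}=F_{xa}(K,\delta_j)$ depends on $K$, while $F_{ea}=F_{ea}(\delta_j)$ does not. $F_{ex}(\delta_j)\in\mathbb{R}^{n_xN_h\times n_xN_h}$ is the strictly block lower-triangular matrix whose $(k,l)$ block is $A_{e,j}^{k-l-1}\Delta A$ for $k>l$ and $0$ otherwise. Define $$F_p(K,\delta_j)=(I_{N_h}\otimes C_J)F_{xa}(K,\delta_j),\qquad F_r(K,\delta_j)=(I_{N_h}\otimes C)\big(F_{ea}(\delta_j)+F_{ex}(\delta_j)F_{xa}(K,\delta_j)\big),$$ and $$q(K,\delta_j)=\sup\{\|F_p(K,\delta_j)\mathbf a\|_2^2:\ \mathbf a\in\mathbb{R}^{n_xN_h},\ \|F_r(K,\delta_j)\mathbf a\|_2^2\le\epsilon_r\}.$$ This is the worst-case squared performance-output energy over the horizon $N_h$ caused by a stacked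 attack sequence $\mathbf a$, subject to a bound on the detection-output energy and with zero initial state. $\|K\|_F$ is the Frobenius norm. $\sigma_1(M)\le\sigma_2(M)\le\dots\le\sigma_{n_xN_h}(M)$ denote the singular values of $M$ in nondecreasing order, so the sum in $\bar q$ omits the smallest singular value of $\kappa^{-1}$. *)

theory Defs
  imports "Jordan_Normal_Form.Matrix" "Jordan_Normal_Form.Char_Poly"
begin

text \<open>Block indices and entries are 0-based; blocks have size nx x nx,
  block (k,l) of an (nx*Nh)x(nx*Nh) matrix occupies rows k*nx..k*nx+nx-1.\<close>

definition block_mat :: "nat \<Rightarrow> nat \<Rightarrow> (nat \<Rightarrow> nat \<Rightarrow> real mat) \<Rightarrow> real mat" where
  "block_mat nx Nh blk = mat (nx * Nh) (nx * Nh)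
     (\<lambda>(r, c). blk (r div nx) (c div nx) $$ (r mod nx, c mod nx))"

definition kron_eye :: "nat \<Rightarrow> nat \<Rightarrow> real mat \<Rightarrow> real mat" where
  "kron_eye nx Nh M = block_mat nx Nh (\<lambda>k l. if k = l then M else 0\<^sub>m nx nx)"

definition F_a :: "nat \<Rightarrow> nat \<Rightarrow> real mat \<Rightarrow> real mat \<Rightarrow> real mat" where
  "F_a nx Nh M B = block_mat nx Nh (\<lambda>k l. if l \<le> k then (M ^\<^sub>m (k - l)) * B else 0\<^sub>m nx nx)"

definition F_ex :: "nat \<Rightarrow> nat \<Rightarrow> real mat \<Rightarrow> real mat \<Rightarrow> real mat" where
  "F_ex nx Nh Ae DA = block_mat nx Nh (\<lambda>k l. if l < k then (Ae ^\<^sub>m (k - l - 1)) * DA else 0\<^sub>m nx nx)"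

definition F_p :: "nat \<Rightarrow> nat \<Rightarrow> real mat \<Rightarrow> real mat \<Rightarrow> real mat \<Rightarrow> real mat \<Rightarrow> real mat \<Rightarrow> real mat" where
  "F_p nx Nh A B C CJ K = kron_eye nx Nh CJ * F_a nx Nh (A + B * K * C) B"

definition F_r :: "nat \<Rightarrow> nat \<Rightarrow> real mat \<Rightarrow> real mat \<Rightarrow> real mat \<Rightarrow> real mat \<Rightarrow> real mat
    \<Rightarrow> real mat \<Rightarrow> real mat" where
  "F_r nx Nh A B C L DA K = kron_eye nx Nh C *
     (F_a nx Nh (A - L * C) B + F_ex nx Nh (A - L * C) DA * F_a nx Nh (A + B * K * C) B)"

definition sqnorm :: "real vec \<Rightarrow> real" where
  "sqnorm v = v \<bullet> v"

definition q_worst :: "nat \<Rightarrow> nat \<Rightarrow> real \<Rightarrow> real mat \<Rightarrow> real mat \<Rightarrow> real mat \<Rightarrow> real mat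
    \<Rightarrow> real mat \<Rightarrow> real mat \<Rightarrow> real mat \<Rightarrow> real" where
  "q_worst nx Nh eps_r A B C CJ L DA K =
     Sup {sqnorm (F_p nx Nh A B C CJ K *\<^sub>v a) | a. a \<in> carrier_vec (nx * Nh)
            \<and> sqnorm (F_r nx Nh A B C L DA K *\<^sub>v a) \<le> eps_r}"

definition minv :: "real mat \<Rightarrow> real mat" where
  "minv M = (SOME N. N \<in> carrier_mat (dim_row M) (dim_row M)
                \<and> M * N = 1\<^sub>m (dim_row M) \<and> N * M = 1\<^sub>m (dim_row M))"

definition sing_vals :: "real mat \<Rightarrow> real list" where
  "sing_vals M = sort (map sqrt (SOME as. length as = dim_col M \<and>
      char_poly (transpose_mat M * M) = (\<Prod>a\<leftarrow>as. [:- a, 1:])))"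

text \<open>sigma_i(M), 1-based, i = 1 is the smallest.\<close>
definition sigma :: "real mat \<Rightarrow> nat \<Rightarrow> real" where
  "sigma M i = sing_vals M ! (i - 1)"

definition frob_norm :: "real mat \<Rightarrow> real" where
  "frob_norm K = sqrt (\<Sum>i<dim_row K. \<Sum>j<dim_col K. (K $$ (i, j))\<^sup>2)"

end

theory Submission
  imports Defs
begin

definition nrm1 :: "real vec \<Rightarrow> real" where "nrm1 v = (\<Sum>i<dim_vec v. \<bar>v$i\<bar>)"
definition mnorm :: "real mat \<Rightarrow> real" where
  "mnorm M = (\<Sum>i<dim_row M. \<Sum>j<dim_col M. \<bar>M$$(i,j)\<bar>)"

lemma nrm1_nonneg: "0 \<le> nrm1 v" unfolding nrm1_def by (intro sum_nonneg) auto
lemma mnorm_nonneg: "0 \<le> mnorm v" unfolding mnorm_def by (intro sum_nonneg) auto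

lemma abs_le_nrm1: "i < dim_vec v \<Longrightarrow> \<bar>v$i\<bar> \<le> nrm1 v"
  unfolding nrm1_def by (rule member_le_sum) auto

lemma abs_le_mnorm: "i < dim_row M \<Longrightarrow> j < dim_col M \<Longrightarrow> \<bar>M$$(i,j)\<bar> \<le> mnorm M"
proof -
  assume a: "i < dim_row M" "j < dim_col M"
  have "\<bar>M$$(i,j)\<bar> \<le> (\<Sum>j<dim_col M. \<bar>M$$(i,j)\<bar>)" by (rule member_le_sum) (use a in auto)
  also have "\<dots> \<le> mnorm M" unfolding mnorm_def
    by (rule member_le_sum[where f="\<lambda>i. \<Sum>j<dim_col M. \<bar>M$$(i,j)\<bar>"]) (use a in \<open>auto intro: sum_nonneg\<close>)
  finally show ?thesis .
qed

lemma nrm1_add: "v \<in> carrier_vec n \<Longrightarrow> w \<in> carrier_vec n \<Longrightarrow> nrm1 (v + w) \<le> nrm1 v + nrm1 w"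
  unfolding nrm1_def by (auto simp: sum.distrib[symmetric] intro!: sum_mono abs_triangle_ineq)

lemma nrm1_minus: "v \<in> carrier_vec n \<Longrightarrow> w \<in> carrier_vec n \<Longrightarrow> nrm1 (v - w) \<le> nrm1 v + nrm1 w"
  unfolding nrm1_def by (auto simp: sum.distrib[symmetric] intro!: sum_mono abs_triangle_ineq4)

lemma nrm1_mult: assumes "M \<in> carrier_mat n m" "v \<in> carrier_vec m"
  shows "nrm1 (M *\<^sub>v v) \<le> mnorm M * nrm1 v"
proof -
  have "nrm1 (M *\<^sub>v v) = (\<Sum>i<n. \<bar>\<Sum>j<m. M$$(i,j) * v$j\<bar>)"
    using assms unfolding nrm1_def
    by (auto simp: scalar_prod_def atLeast0LessThan intro!: sum.cong)
  also have "\<dots> \<le> (\<Sum>i<n. \<Sum>j<m. \<bar>M$$(i,j)\<bar> * nrm1 v)"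
  proof (intro sum_mono)
    fix i assume "i \<in> {..<n}"
    have "\<bar>\<Sum>j<m. M$$(i,j) * v$j\<bar> \<le> (\<Sum>j<m. \<bar>M$$(i,j) * v$j\<bar>)" by (rule sum_abs)
    also have "\<dots> \<le> (\<Sum>j<m. \<bar>M$$(i,j)\<bar> * nrm1 v)"
      using assms by (auto simp: abs_mult intro!: sum_mono mult_left_mono abs_le_nrm1)
    finally show "\<bar>\<Sum>j<m. M$$(i,j) * v$j\<bar> \<le> (\<Sum>j<m. \<bar>M$$(i,j)\<bar> * nrm1 v)" .
  qed
  also have "\<dots> = mnorm M * nrm1 v" using assms
    by (simp add: mnorm_def sum_distrib_right)
  finally show ?thesis .
qed

lemma mnorm_mult: assumes "X \<in> carrier_mat n m" "Y \<in> carrier_mat m p"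
  shows "mnorm (X * Y) \<le> mnorm X * mnorm Y"
proof -
  have "mnorm (X * Y) = (\<Sum>i<n. \<Sum>j<p. \<bar>\<Sum>k<m. X$$(i,k) * Y$$(k,j)\<bar>)"
    using assms unfolding mnorm_def
    by (auto simp: scalar_prod_def atLeast0LessThan intro!: sum.cong)
  also have "\<dots> \<le> (\<Sum>i<n. \<Sum>j<p. \<Sum>k<m. \<bar>X$$(i,k)\<bar> * \<bar>Y$$(k,j)\<bar>)"
    by (intro sum_mono) (auto simp: abs_mult[symmetric] intro: order_trans[OF sum_abs])
  also have "\<dots> = (\<Sum>i<n. \<Sum>k<m. \<bar>X$$(i,k)\<bar> * (\<Sum>j<p. \<bar>Y$$(k,j)\<bar>))"
    by (simp add: sum_distrib_left sum.swap[of _ "{..<p}"])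
  also have "\<dots> \<le> (\<Sum>i<n. \<Sum>k<m. \<bar>X$$(i,k)\<bar> * mnorm Y)"
    unfolding mnorm_def using assms
    by (intro sum_mono mult_left_mono) (auto intro!: member_le_sum[where f="\<lambda>k. \<Sum>j<p. \<bar>Y$$(k,j)\<bar>"] sum_nonneg)
  also have "\<dots> = mnorm X * mnorm Y" using assms by (simp add: mnorm_def sum_distrib_right)
  finally show ?thesis .
qed

lemma mnorm_add: assumes "X \<in> carrier_mat n m" "Y \<in> carrier_mat n m"
  shows "mnorm (X + Y) \<le> mnorm X + mnorm Y"
  using assms unfolding mnorm_def by (auto simp: sum.distrib[symmetric] intro!: sum_mono abs_triangle_ineq)

lemma mnorm_minus: assumes "X \<in> carrier_mat n m" "Y \<in> carrier_mat n m"
  shows "mnorm (X - Y) \<le> mnorm X + mnorm Y"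
  using assms unfolding mnorm_def by (auto simp: sum.distrib[symmetric] intro!: sum_mono abs_triangle_ineq4)

lemma sqnorm_le_nrm1: "sqnorm v \<le> (nrm1 v)^2"
proof -
  have "sqnorm v = (\<Sum>i<dim_vec v. \<bar>v$i\<bar> * \<bar>v$i\<bar>)"
    unfolding sqnorm_def scalar_prod_def by (auto simp: atLeast0LessThan intro!: sum.cong)
  also have "\<dots> \<le> (\<Sum>i<dim_vec v. \<bar>v$i\<bar> * nrm1 v)"
    by (intro sum_mono mult_left_mono abs_le_nrm1) auto
  also have "\<dots> = (nrm1 v)^2" by (simp add: sum_distrib_right[symmetric] nrm1_def power2_eq_square)
  finally show ?thesis .
qed

lemma nrm1_sq_le: "(nrm1 v)^2 \<le> dim_vec v * sqnorm v"
proof -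
  let ?n = "dim_vec v"
  have "(nrm1 v)^2 = (\<Sum>i<?n. \<Sum>j<?n. \<bar>v$i\<bar> * \<bar>v$j\<bar>)"
    by (simp add: nrm1_def power2_eq_square sum_product)
  also have "\<dots> \<le> (\<Sum>i<?n. \<Sum>j<?n. ((v$i)^2 + (v$j)^2) / 2)"
  proof (intro sum_mono)
    fix i j
    have "0 \<le> (\<bar>v$i\<bar> - \<bar>v$j\<bar>)^2" by simp
    thus "\<bar>v$i\<bar> * \<bar>v$j\<bar> \<le> ((v$i)^2 + (v$j)^2) / 2"
      by (simp add: power2_eq_square algebra_simps)
  qed
  also have "\<dots> = real ?n * (\<Sum>i<?n. (v$i)^2)"
    by (simp add: sum.distrib add_divide_distrib sum_divide_distrib[symmetric] sum.swap[of _ "{..<?n}"] sum_distrib_left[symmetric])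
  also have "\<dots> = ?n * sqnorm v"
    unfolding sqnorm_def scalar_prod_def by (auto simp: atLeast0LessThan power2_eq_square)
  finally show ?thesis .
qed

definition blk :: "nat \<Rightarrow> real vec \<Rightarrow> nat \<Rightarrow> real vec" where
  "blk nx v k = vec nx (\<lambda>i. v $ (k*nx+i))"
definition vsum :: "nat \<Rightarrow> (nat \<Rightarrow> real vec) \<Rightarrow> nat set \<Rightarrow> real vec" where
  "vsum nx f S = vec nx (\<lambda>i. \<Sum>l\<in>S. f l $ i)"

lemma blk_carrier[simp]: "blk nx v k \<in> carrier_vec nx" unfolding blk_def by simp
lemma blk_dim[simp]: "dim_vec (blk nx v k) = nx" unfolding blk_def by simp
lemma blk_index[simp]: "i < nx \<Longrightarrow> blk nx v k $ i = v $ (k*nx+i)" unfolding blk_def by simp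
lemma vsum_carrier[simp]: "vsum nx f S \<in> carrier_vec nx" unfolding vsum_def by simp
lemma vsum_dim[simp]: "dim_vec (vsum nx f S) = nx" unfolding vsum_def by simp
lemma vsum_index[simp]: "i < nx \<Longrightarrow> vsum nx f S $ i = (\<Sum>l\<in>S. f l $ i)" unfolding vsum_def by simp

lemma sum_shift_lt: "sum g {a..<a+(k::nat)} = (\<Sum>j<k. g (a+j))"
  by (induct k) auto

lemma sum_blocks: "(\<Sum>c<(nx::nat)*Nh. g c) = (\<Sum>l<Nh. \<Sum>j<nx. g (l*nx+j))"
proof -
  have "(\<Sum>c<nx*Nh. g c) = (\<Sum>c<Nh*nx. g c)" by (simp only: mult.commute[of nx Nh])
  also have "\<dots> = (\<Sum>l<Nh. sum g {l*nx..<l*nx+nx})" by (rule sum.nat_group[symmetric])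
  also have "\<dots> = (\<Sum>l<Nh. \<Sum>j<nx. g (l*nx+j))" by (simp add: sum_shift_lt)
  finally show ?thesis .
qed

lemma divmod_blk: "i < (nx::nat) \<Longrightarrow> (k*nx+i) div nx = k \<and> (k*nx+i) mod nx = i"
  by (simp add: add.commute[of "k*nx" i])

lemma block_mat_mult_vec:
  assumes F: "\<And>k l. k<Nh \<Longrightarrow> l<Nh \<Longrightarrow> F k l \<in> carrier_mat nx nx"
    and v: "v \<in> carrier_vec (nx*Nh)" and k: "k < Nh"
  shows "blk nx (block_mat nx Nh F *\<^sub>v v) k = vsum nx (\<lambda>l. F k l *\<^sub>v blk nx v l) {..<Nh}"
proof (rule eq_vecI)
  fix i assume "i < dim_vec (vsum nx (\<lambda>l. F k l *\<^sub>v blk nx v l) {..<Nh})"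
  hence i: "i < nx" by simp
  have ki: "k*nx+i < nx*Nh"
  proof -
    have "k*nx+i < k*nx + nx" using i by simp
    also have "\<dots> = (k+1)*nx" by simp
    also have "\<dots> \<le> Nh*nx" using k by (intro mult_right_mono) auto
    finally show ?thesis by (simp add: mult.commute)
  qed
  have "blk nx (block_mat nx Nh F *\<^sub>v v) k $ i = (\<Sum>c<nx*Nh. F k (c div nx) $$ (i, c mod nx) * v $ c)"
    using i ki v divmod_blk[OF i, of k]
    by (simp add: block_mat_def scalar_prod_def atLeast0LessThan)
  also have "\<dots> = (\<Sum>l<Nh. \<Sum>j<nx. F k l $$ (i, j) * v $ (l*nx+j))"
    by (subst sum_blocks) (auto intro!: sum.cong)
  also have "\<dots> = vsum nx (\<lambda>l. F k l *\<^sub>v blk nx v l) {..<Nh} $ i"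
  proof -
    have "\<And>l. l < Nh \<Longrightarrow> (\<Sum>j<nx. F k l $$ (i, j) * v $ (l*nx+j)) = (F k l *\<^sub>v blk nx v l) $ i"
    proof -
      fix l assume l: "l < Nh"
      have Fk: "F k l \<in> carrier_mat nx nx" using F[OF k l] .
      thus "(\<Sum>j<nx. F k l $$ (i, j) * v $ (l*nx+j)) = (F k l *\<^sub>v blk nx v l) $ i"
        using i by (auto simp: scalar_prod_def atLeast0LessThan intro!: sum.cong)
    qed
    thus ?thesis using i by auto
  qed
  finally show "blk nx (block_mat nx Nh F *\<^sub>v v) k $ i = vsum nx (\<lambda>l. F k l *\<^sub>v blk nx v l) {..<Nh} $ i" .
qed simp

lemma vec_eq_blk:
  assumes v: "v \<in> carrier_vec (nx*Nh)" and w: "w \<in> carrier_vec (nx*Nh)"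
    and eq: "\<And>k. k < Nh \<Longrightarrow> blk nx v k = blk nx w k"
  shows "v = w"
proof (rule eq_vecI)
  fix c assume "c < dim_vec w"
  hence c: "c < nx*Nh" using w by simp
  hence nx: "0 < nx" by (cases nx) auto
  have k: "c div nx < Nh" using c by (simp add: less_mult_imp_div_less mult.commute)
  have i: "c mod nx < nx" using nx by simp
  have "v $ c = blk nx v (c div nx) $ (c mod nx)" using i by simp
  also have "\<dots> = blk nx w (c div nx) $ (c mod nx)" using eq[OF k] by simp
  also have "\<dots> = w $ c" using i by simp
  finally show "v $ c = w $ c" .
qed (use v w in simp)

lemma nrm1_blocks: assumes v: "v \<in> carrier_vec (nx*Nh)"
  shows "nrm1 v = (\<Sum>k<Nh. nrm1 (blk nx v k))"
  using v unfolding nrm1_def by (simp add: sum_blocks)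

lemma nrm1_blk_le: assumes v: "v \<in> carrier_vec (nx*Nh)" and k: "k < Nh"
  shows "nrm1 (blk nx v k) \<le> nrm1 v"
  unfolding nrm1_blocks[OF v]
  by (rule member_le_sum[where f="\<lambda>k. nrm1 (blk nx v k)"]) (use k in \<open>auto intro: nrm1_nonneg\<close>)

lemma mult_vsum: assumes M: "M \<in> carrier_mat nx nx" and f: "\<And>l. l \<in> S \<Longrightarrow> f l \<in> carrier_vec nx"
  shows "M *\<^sub>v vsum nx f S = vsum nx (\<lambda>l. M *\<^sub>v f l) S"
proof (rule eq_vecI)
  fix i assume "i < dim_vec (vsum nx (\<lambda>l. M *\<^sub>v f l) S)"
  hence i: "i < nx" by simp
  have "(M *\<^sub>v vsum nx f S) $ i = (\<Sum>j<nx. M $$ (i,j) * (\<Sum>l\<in>S. f l $ j))"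
    using M i by (simp add: scalar_prod_def atLeast0LessThan)
  also have "\<dots> = (\<Sum>l\<in>S. \<Sum>j<nx. M $$ (i,j) * f l $ j)"
    by (simp add: sum_distrib_left sum.swap[of _ S])
  also have "\<dots> = vsum nx (\<lambda>l. M *\<^sub>v f l) S $ i"
  proof -
    have "\<And>l. l \<in> S \<Longrightarrow> (\<Sum>j<nx. M $$ (i,j) * f l $ j) = (M *\<^sub>v f l) $ i"
    proof -
      fix l assume l: "l \<in> S"
      from f[OF l] have "dim_vec (f l) = nx" by auto
      thus "(\<Sum>j<nx. M $$ (i,j) * f l $ j) = (M *\<^sub>v f l) $ i"
        using M i by (auto simp: scalar_prod_def atLeast0LessThan intro!: sum.cong)
    qed
    thus ?thesis using i by auto
  qed
  finally show "(M *\<^sub>v vsum nx f S) $ i = vsum nx (\<lambda>l. M *\<^sub>v f l) S $ i" .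
qed (use M in simp)

lemma vsum_insert: assumes "finite S" "l \<notin> S" "f l \<in> carrier_vec nx"
  shows "vsum nx f (insert l S) = f l + vsum nx f S"
  using assms by (intro eq_vecI) auto

lemma vsum_empty[simp]: "vsum nx f {} = 0\<^sub>v nx"
  by (intro eq_vecI) auto

lemma vsum_cong: "(\<And>l. l \<in> S \<Longrightarrow> f l = g l) \<Longrightarrow> vsum nx f S = vsum nx g S"
  unfolding vsum_def by (intro eq_vecI) auto

lemma vsum_filter: assumes "finite S"
  shows "vsum nx (\<lambda>l. if P l then f l else 0\<^sub>v nx) S = vsum nx f {l\<in>S. P l}"
proof (rule eq_vecI)
  fix i assume "i < dim_vec (vsum nx f {l\<in>S. P l})"
  hence i: "i < nx" by simp
  have "vsum nx (\<lambda>l. if P l then f l else 0\<^sub>v nx) S $ i = (\<Sum>l\<in>S. if P l then f l $ i else 0)"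
    using i by (auto intro!: sum.cong)
  also have "\<dots> = (\<Sum>l\<in>{l\<in>S. P l}. f l $ i)" using assms by (simp add: sum.inter_filter)
  finally show "vsum nx (\<lambda>l. if P l then f l else 0\<^sub>v nx) S $ i = vsum nx f {l\<in>S. P l} $ i"
    using i by simp
qed simp

lemma pow_mat_Suc_left: assumes "M \<in> carrier_mat n n"
  shows "M ^\<^sub>m Suc k = M * M ^\<^sub>m k"
proof (induct k)
  case 0 thus ?case using assms by simp
next
  case (Suc k)
  have "M ^\<^sub>m Suc (Suc k) = (M * M ^\<^sub>m k) * M" using Suc by simp
  also have "\<dots> = M * (M ^\<^sub>m k * M)" using assms by (intro assoc_mult_mat) auto
  finally show ?case by simp
qed

lemma pow_carrier[simp]: "M \<in> carrier_mat n n \<Longrightarrow> M ^\<^sub>m k \<in> carrier_mat n n" by simp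

lemma F_a_blk:
  assumes M: "M \<in> carrier_mat nx nx" and B: "B \<in> carrier_mat nx nx"
    and a: "a \<in> carrier_vec (nx*Nh)" and k: "k < Nh"
  shows "blk nx (F_a nx Nh M B *\<^sub>v a) k = vsum nx (\<lambda>l. (M ^\<^sub>m (k-l) * B) *\<^sub>v blk nx a l) {..k}"
proof -
  have "blk nx (F_a nx Nh M B *\<^sub>v a) k
      = vsum nx (\<lambda>l. (if l \<le> k then M ^\<^sub>m (k-l) * B else 0\<^sub>m nx nx) *\<^sub>v blk nx a l) {..<Nh}"
    unfolding F_a_def using M B a k by (intro block_mat_mult_vec) auto
  also have "\<dots> = vsum nx (\<lambda>l. if l \<le> k then (M ^\<^sub>m (k-l) * B) *\<^sub>v blk nx a l else 0\<^sub>v nx) {..<Nh}"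
    by (rule vsum_cong) auto
  also have "\<dots> = vsum nx (\<lambda>l. (M ^\<^sub>m (k-l) * B) *\<^sub>v blk nx a l) {l\<in>{..<Nh}. l \<le> k}"
    by (rule vsum_filter) auto
  also have "{l\<in>{..<Nh}. l \<le> k} = {..k}" using k by auto
  finally show ?thesis .
qed

lemma F_a_rec0:
  assumes M: "M \<in> carrier_mat nx nx" and B: "B \<in> carrier_mat nx nx"
    and a: "a \<in> carrier_vec (nx*Nh)" and k: "0 < Nh"
  shows "blk nx (F_a nx Nh M B *\<^sub>v a) 0 = B *\<^sub>v blk nx a 0"
proof -
  have "{..0::nat} = insert 0 {}" by auto
  thus ?thesis unfolding F_a_blk[OF M B a k] using M B
    by (simp add: vsum_insert)
qed

lemma F_a_rec:
  assumes M: "M \<in> carrier_mat nx nx" and B: "B \<in> carrier_mat nx nx"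
    and a: "a \<in> carrier_vec (nx*Nh)" and k: "Suc k < Nh"
  shows "blk nx (F_a nx Nh M B *\<^sub>v a) (Suc k) = M *\<^sub>v blk nx (F_a nx Nh M B *\<^sub>v a) k + B *\<^sub>v blk nx a (Suc k)"
proof -
  have k': "k < Nh" using k by simp
  have "{..Suc k} = insert (Suc k) {..k}" by auto
  hence "blk nx (F_a nx Nh M B *\<^sub>v a) (Suc k)
     = B *\<^sub>v blk nx a (Suc k) + vsum nx (\<lambda>l. (M ^\<^sub>m (Suc k-l) * B) *\<^sub>v blk nx a l) {..k}"
    unfolding F_a_blk[OF M B a k] using M B by (simp add: vsum_insert)
  also have "vsum nx (\<lambda>l. (M ^\<^sub>m (Suc k-l) * B) *\<^sub>v blk nx a l) {..k}
      = vsum nx (\<lambda>l. M *\<^sub>v ((M ^\<^sub>m (k-l) * B) *\<^sub>v blk nx a l)) {..k}"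
  proof (rule vsum_cong)
    fix l assume "l \<in> {..k}"
    hence "Suc k - l = Suc (k - l)" by auto
    hence "M ^\<^sub>m (Suc k-l) = M * M ^\<^sub>m (k-l)" using pow_mat_Suc_left[OF M] by simp
    hence e: "M ^\<^sub>m (Suc k-l) * B = M * (M ^\<^sub>m (k-l) * B)"
      using M B by (simp add: assoc_mult_mat[of M nx nx _ nx B nx])
    show "(M ^\<^sub>m (Suc k-l) * B) *\<^sub>v blk nx a l = M *\<^sub>v ((M ^\<^sub>m (k-l) * B) *\<^sub>v blk nx a l)"
      unfolding e by (rule assoc_mult_mat_vec) (use M B in auto)
  qed
  also have "\<dots> = M *\<^sub>v blk nx (F_a nx Nh M B *\<^sub>v a) k"
    unfolding F_a_blk[OF M B a k'] using M B by (intro mult_vsum[symmetric]) (auto intro!: mult_mat_vec_carrier[of _ nx nx] mult_carrier_mat[of _ nx nx])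
  finally show ?thesis using M B by (simp add: comm_add_vec[of _ nx])
qed

lemma F_ex_blk:
  assumes M: "M \<in> carrier_mat nx nx" and D: "D \<in> carrier_mat nx nx"
    and a: "a \<in> carrier_vec (nx*Nh)" and k: "k < Nh"
  shows "blk nx (F_ex nx Nh M D *\<^sub>v a) k = vsum nx (\<lambda>l. (M ^\<^sub>m (k-l-1) * D) *\<^sub>v blk nx a l) {..<k}"
proof -
  have "blk nx (F_ex nx Nh M D *\<^sub>v a) k
      = vsum nx (\<lambda>l. (if l < k then M ^\<^sub>m (k-l-1) * D else 0\<^sub>m nx nx) *\<^sub>v blk nx a l) {..<Nh}"
    unfolding F_ex_def using M D a k by (intro block_mat_mult_vec) auto
  also have "\<dots> = vsum nx (\<lambda>l. if l < k then (M ^\<^sub>m (k-l-1) * D) *\<^sub>v blk nx a l else 0\<^sub>v nx) {..<Nh}"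
    by (rule vsum_cong) auto
  also have "\<dots> = vsum nx (\<lambda>l. (M ^\<^sub>m (k-l-1) * D) *\<^sub>v blk nx a l) {l\<in>{..<Nh}. l < k}"
    by (rule vsum_filter) auto
  also have "{l\<in>{..<Nh}. l < k} = {..<k}" using k by auto
  finally show ?thesis .
qed

lemma F_ex_rec0:
  assumes M: "M \<in> carrier_mat nx nx" and D: "D \<in> carrier_mat nx nx"
    and a: "a \<in> carrier_vec (nx*Nh)" and k: "0 < Nh"
  shows "blk nx (F_ex nx Nh M D *\<^sub>v a) 0 = 0\<^sub>v nx"
  unfolding F_ex_blk[OF M D a k] by simp

lemma F_ex_rec:
  assumes M: "M \<in> carrier_mat nx nx" and D: "D \<in> carrier_mat nx nx"
    and a: "a \<in> carrier_vec (nx*Nh)" and k: "Suc k < Nh"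
  shows "blk nx (F_ex nx Nh M D *\<^sub>v a) (Suc k) = M *\<^sub>v blk nx (F_ex nx Nh M D *\<^sub>v a) k + D *\<^sub>v blk nx a k"
proof -
  have k': "k < Nh" using k by simp
  have "{..<Suc k} = insert k {..<k}" by auto
  hence "blk nx (F_ex nx Nh M D *\<^sub>v a) (Suc k)
     = D *\<^sub>v blk nx a k + vsum nx (\<lambda>l. (M ^\<^sub>m (Suc k-l-1) * D) *\<^sub>v blk nx a l) {..<k}"
    unfolding F_ex_blk[OF M D a k] using M D by (simp add: vsum_insert)
  also have "vsum nx (\<lambda>l. (M ^\<^sub>m (Suc k-l-1) * D) *\<^sub>v blk nx a l) {..<k}
      = vsum nx (\<lambda>l. M *\<^sub>v ((M ^\<^sub>m (k-l-1) * D) *\<^sub>v blk nx a l)) {..<k}"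
  proof (rule vsum_cong)
    fix l assume "l \<in> {..<k}"
    hence "Suc k - l - 1 = Suc (k - l - 1)" by auto
    hence "M ^\<^sub>m (Suc k-l-1) = M * M ^\<^sub>m (k-l-1)" using pow_mat_Suc_left[OF M] by simp
    hence e: "M ^\<^sub>m (Suc k-l-1) * D = M * (M ^\<^sub>m (k-l-1) * D)"
      using M D by (simp add: assoc_mult_mat[of M nx nx _ nx D nx])
    show "(M ^\<^sub>m (Suc k-l-1) * D) *\<^sub>v blk nx a l = M *\<^sub>v ((M ^\<^sub>m (k-l-1) * D) *\<^sub>v blk nx a l)"
      unfolding e by (rule assoc_mult_mat_vec) (use M D in auto)
  qed
  also have "\<dots> = M *\<^sub>v blk nx (F_ex nx Nh M D *\<^sub>v a) k"
    unfolding F_ex_blk[OF M D a k'] using M D by (intro mult_vsum[symmetric]) (auto intro!: mult_mat_vec_carrier[of _ nx nx] mult_carrier_mat[of _ nx nx])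
  finally show ?thesis using M D by (simp add: comm_add_vec[of _ nx])
qed

lemma kron_blk:
  assumes M: "M \<in> carrier_mat nx nx" and a: "a \<in> carrier_vec (nx*Nh)" and k: "k < Nh"
  shows "blk nx (kron_eye nx Nh M *\<^sub>v a) k = M *\<^sub>v blk nx a k"
proof -
  have "blk nx (kron_eye nx Nh M *\<^sub>v a) k
      = vsum nx (\<lambda>l. (if k = l then M else 0\<^sub>m nx nx) *\<^sub>v blk nx a l) {..<Nh}"
    unfolding kron_eye_def using M a k by (intro block_mat_mult_vec) auto
  also have "\<dots> = vsum nx (\<lambda>l. if l = k then M *\<^sub>v blk nx a l else 0\<^sub>v nx) {..<Nh}"
    by (rule vsum_cong) auto
  also have "\<dots> = vsum nx (\<lambda>l. M *\<^sub>v blk nx a l) {l\<in>{..<Nh}. l = k}"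
    by (rule vsum_filter) auto
  also have "{l\<in>{..<Nh}. l = k} = insert k {}" using k by auto
  finally show ?thesis using M by (simp add: vsum_insert)
qed

lemma inv_ex: assumes M: "M \<in> carrier_mat n n" and i: "invertible_mat M"
  shows "\<exists>Mi. Mi \<in> carrier_mat n n \<and> Mi * M = 1\<^sub>m n \<and> M * Mi = 1\<^sub>m n"
proof -
  from i obtain Mi where 1: "inverts_mat M Mi" and 2: "inverts_mat Mi M" unfolding invertible_mat_def by auto
  from 1 M have e1: "M * Mi = 1\<^sub>m n" unfolding inverts_mat_def by auto
  from 2 have e2: "Mi * M = 1\<^sub>m (dim_row Mi)" unfolding inverts_mat_def by auto
  have c: "dim_col Mi = n" using arg_cong[OF e1, of dim_col] by simp
  have r: "dim_row Mi = n" using arg_cong[OF e2, of dim_col] M by simp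
  show ?thesis using e1 e2 c r by (auto intro!: exI[of _ Mi] carrier_matI)
qed

lemma block_mat_carrier[simp]: "block_mat nx Nh f \<in> carrier_mat (nx*Nh) (nx*Nh)"
  unfolding block_mat_def by simp
lemma F_a_carrier[simp]: "F_a nx Nh M B \<in> carrier_mat (nx*Nh) (nx*Nh)"
  unfolding F_a_def by simp
lemma F_ex_carrier[simp]: "F_ex nx Nh M B \<in> carrier_mat (nx*Nh) (nx*Nh)"
  unfolding F_ex_def by simp
lemma kron_carrier[simp]: "kron_eye nx Nh M \<in> carrier_mat (nx*Nh) (nx*Nh)"
  unfolding kron_eye_def by simp

lemma blk_add: assumes "v \<in> carrier_vec (nx*Nh)" "w \<in> carrier_vec (nx*Nh)" "k < Nh"
  shows "blk nx (v + w) k = blk nx v k + blk nx w k"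
proof (rule eq_vecI)
  fix i assume "i < dim_vec (blk nx v k + blk nx w k)"
  hence i: "i < nx" by simp
  have "k*nx+i < (k+1)*nx" using i by simp
  also have "\<dots> \<le> Nh*nx" using assms(3) by (intro mult_right_mono) auto
  finally have "k*nx+i < nx*Nh" by (simp add: mult.commute)
  thus "blk nx (v + w) k $ i = (blk nx v k + blk nx w k) $ i" using i assms by simp
qed simp

lemma blk_zero: assumes "k < Nh" shows "blk nx (0\<^sub>v (nx*Nh)) k = 0\<^sub>v nx"
proof (rule eq_vecI)
  fix i assume "i < dim_vec (0\<^sub>v nx :: real vec)"
  hence i: "i < nx" by simp
  have "k*nx+i < (k+1)*nx" using i by simp
  also have "\<dots> \<le> Nh*nx" using assms by (intro mult_right_mono) auto
  finally have "k*nx+i < nx*Nh" by (simp add: mult.commute)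
  thus "blk nx (0\<^sub>v (nx*Nh)) k $ i = 0\<^sub>v nx $ i" using i by simp
qed simp

locale sys =
  fixes nx Nh :: nat and A B C CJ L DA :: "real mat"
  assumes nx: "0 < nx" and Nh: "0 < Nh"
    and A: "A \<in> carrier_mat nx nx" and B: "B \<in> carrier_mat nx nx" and C: "C \<in> carrier_mat nx nx"
    and CJ: "CJ \<in> carrier_mat nx nx" and L: "L \<in> carrier_mat nx nx" and DA: "DA \<in> carrier_mat nx nx"
    and iB: "invertible_mat B" and iC: "invertible_mat C" and iCJ: "invertible_mat CJ"
begin

definition Ae where "Ae = A - L * C"
definition Ax where "Ax K = A + B * K * C"
definition Ci where "Ci = (SOME Mi. Mi \<in> carrier_mat nx nx \<and> Mi * C = 1\<^sub>m nx \<and> C * Mi = 1\<^sub>m nx)"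
definition Bi where "Bi = (SOME Mi. Mi \<in> carrier_mat nx nx \<and> Mi * B = 1\<^sub>m nx \<and> B * Mi = 1\<^sub>m nx)"
definition CJi where "CJi = (SOME Mi. Mi \<in> carrier_mat nx nx \<and> Mi * CJ = 1\<^sub>m nx \<and> CJ * Mi = 1\<^sub>m nx)"

lemma Ci: "Ci \<in> carrier_mat nx nx" "Ci * C = 1\<^sub>m nx"
  using someI_ex[OF inv_ex[OF C iC]] unfolding Ci_def by auto
lemma Bi: "Bi \<in> carrier_mat nx nx" "Bi * B = 1\<^sub>m nx"
  using someI_ex[OF inv_ex[OF B iB]] unfolding Bi_def by auto
lemma CJi: "CJi \<in> carrier_mat nx nx" "CJi * CJ = 1\<^sub>m nx"
  using someI_ex[OF inv_ex[OF CJ iCJ]] unfolding CJi_def by auto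

lemma Ae_carrier: "Ae \<in> carrier_mat nx nx" unfolding Ae_def using A L C by auto
lemma Ax_carrier: "K \<in> carrier_mat nx nx \<Longrightarrow> Ax K \<in> carrier_mat nx nx" unfolding Ax_def using A B C by auto

lemma left_inv_vec: assumes "(Mi::real mat) \<in> carrier_mat nx nx" "M \<in> carrier_mat nx nx" "Mi * M = 1\<^sub>m nx"
   "v \<in> carrier_vec nx" shows "Mi *\<^sub>v (M *\<^sub>v v) = v"
proof -
  have "(Mi * M) *\<^sub>v v = Mi *\<^sub>v (M *\<^sub>v v)" by (rule assoc_mult_mat_vec) (use assms in auto)
  hence "Mi *\<^sub>v (M *\<^sub>v v) = (Mi * M) *\<^sub>v v" by simp
  thus ?thesis using assms one_mult_mat_vec[OF assms(4)] by simp
qed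

definition Pb where "Pb K = Nh * mnorm CJ * ((1 + mnorm Ae) * mnorm Ci) * (1 + mnorm (Ax K - DA))^(Nh-1)"

lemma Pb_nonneg: "0 \<le> Pb K" unfolding Pb_def
  by (intro mult_nonneg_nonneg zero_le_power) (auto intro: mnorm_nonneg add_nonneg_nonneg)

lemma Fp_eq: assumes K: "K \<in> carrier_mat nx nx" and a: "a \<in> carrier_vec (nx*Nh)"
  shows "F_p nx Nh A B C CJ K *\<^sub>v a = kron_eye nx Nh CJ *\<^sub>v (F_a nx Nh (Ax K) B *\<^sub>v a)"
  unfolding F_p_def Ax_def[symmetric] using a
  by (intro assoc_mult_mat_vec[of _ "nx*Nh" "nx*Nh" _ "nx*Nh"]) auto

lemma Fr_eq: assumes K: "K \<in> carrier_mat nx nx" and a: "a \<in> carrier_vec (nx*Nh)"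
  shows "F_r nx Nh A B C L DA K *\<^sub>v a = kron_eye nx Nh C *\<^sub>v
     (F_a nx Nh Ae B *\<^sub>v a + F_ex nx Nh Ae DA *\<^sub>v (F_a nx Nh (Ax K) B *\<^sub>v a))"
proof -
  let ?n = "nx*Nh"
  have FF: "F_ex nx Nh Ae DA * F_a nx Nh (Ax K) B \<in> carrier_mat ?n ?n" by (rule mult_carrier_mat[where n="nx*Nh"]) auto
  have "F_r nx Nh A B C L DA K *\<^sub>v a = kron_eye nx Nh C *\<^sub>v
     ((F_a nx Nh Ae B + F_ex nx Nh Ae DA * F_a nx Nh (Ax K) B) *\<^sub>v a)"
    unfolding F_r_def Ax_def[symmetric] Ae_def[symmetric] using a
    by (intro assoc_mult_mat_vec[of _ ?n ?n _ ?n]) (use FF in auto)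
  also have "(F_a nx Nh Ae B + F_ex nx Nh Ae DA * F_a nx Nh (Ax K) B) *\<^sub>v a
     = F_a nx Nh Ae B *\<^sub>v a + (F_ex nx Nh Ae DA * F_a nx Nh (Ax K) B) *\<^sub>v a"
    using a FF by (intro add_mult_distrib_mat_vec[of _ ?n ?n]) auto
  also have "(F_ex nx Nh Ae DA * F_a nx Nh (Ax K) B) *\<^sub>v a = F_ex nx Nh Ae DA *\<^sub>v (F_a nx Nh (Ax K) B *\<^sub>v a)"
    using a by (intro assoc_mult_mat_vec[of _ ?n ?n _ ?n]) auto
  finally show ?thesis .
qed

end

context sys begin

lemma dyn:
  assumes K: "K \<in> carrier_mat nx nx" and a: "a \<in> carrier_vec (nx*Nh)"
    and X_def: "X = F_a nx Nh (Ax K) B *\<^sub>v a" and U_def: "U = F_a nx Nh Ae B *\<^sub>v a"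
    and W_def: "W = F_ex nx Nh Ae DA *\<^sub>v X"
  shows "blk nx X 0 = blk nx (U + W) 0"
    and "\<And>k. Suc k < Nh \<Longrightarrow> blk nx X (Suc k) = (Ax K - DA) *\<^sub>v blk nx X k + (blk nx (U+W) (Suc k) - Ae *\<^sub>v blk nx (U+W) k)"
    and "\<And>k. Suc k < Nh \<Longrightarrow> blk nx X (Suc k) = Ax K *\<^sub>v blk nx X k + B *\<^sub>v blk nx a (Suc k)"
    and "blk nx X 0 = B *\<^sub>v blk nx a 0"
proof -
  have AxK: "Ax K \<in> carrier_mat nx nx" using Ax_carrier[OF K] .
  have Ae: "Ae \<in> carrier_mat nx nx" using Ae_carrier .
  have Xc: "X \<in> carrier_vec (nx*Nh)" unfolding X_def by (rule mult_mat_vec_carrier[OF F_a_carrier a])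
  have Uc: "U \<in> carrier_vec (nx*Nh)" unfolding U_def by (rule mult_mat_vec_carrier[OF F_a_carrier a])
  have Wc: "W \<in> carrier_vec (nx*Nh)" unfolding W_def by (rule mult_mat_vec_carrier[OF F_ex_carrier Xc])
  show x0: "blk nx X 0 = B *\<^sub>v blk nx a 0" unfolding X_def by (rule F_a_rec0[OF AxK B a Nh])
  show x1: "\<And>k. Suc k < Nh \<Longrightarrow> blk nx X (Suc k) = Ax K *\<^sub>v blk nx X k + B *\<^sub>v blk nx a (Suc k)"
    unfolding X_def by (rule F_a_rec[OF AxK B a])
  have "blk nx (U + W) 0 = blk nx U 0 + blk nx W 0" using Uc Wc Nh by (rule blk_add)
  also have "\<dots> = B *\<^sub>v blk nx a 0 + 0\<^sub>v nx"
    unfolding U_def W_def F_a_rec0[OF Ae B a Nh] F_ex_rec0[OF Ae DA Xc Nh] ..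
  also have "\<dots> = B *\<^sub>v blk nx a 0" using B by simp
  finally show "blk nx X 0 = blk nx (U + W) 0" using x0 by simp
  fix k assume k: "Suc k < Nh"
  have k': "k < Nh" using k by simp
  let ?x = "blk nx X k" and ?u = "blk nx U k" and ?w = "blk nx W k" and ?ab = "blk nx a (Suc k)"
  have e1: "blk nx X (Suc k) = Ax K *\<^sub>v ?x + B *\<^sub>v ?ab" using x1[OF k] .
  have e2: "blk nx (U+W) (Suc k) = (Ae *\<^sub>v ?u + B *\<^sub>v ?ab) + (Ae *\<^sub>v ?w + DA *\<^sub>v ?x)"
    using blk_add[OF Uc Wc k] unfolding U_def W_def F_a_rec[OF Ae B a k] F_ex_rec[OF Ae DA Xc k] by simp
  have e3: "Ae *\<^sub>v blk nx (U+W) k = Ae *\<^sub>v ?u + Ae *\<^sub>v ?w"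
    unfolding blk_add[OF Uc Wc k'] by (rule mult_add_distrib_mat_vec[OF Ae]) auto
  have e4: "(Ax K - DA) *\<^sub>v ?x = Ax K *\<^sub>v ?x - DA *\<^sub>v ?x"
    by (rule minus_mult_distrib_mat_vec[OF AxK DA]) auto
  show "blk nx X (Suc k) = (Ax K - DA) *\<^sub>v blk nx X k + (blk nx (U+W) (Suc k) - Ae *\<^sub>v blk nx (U+W) k)"
    unfolding e1 e2 e3 e4
    using carrier_matD[OF AxK] carrier_matD[OF Ae] carrier_matD[OF B] carrier_matD[OF DA]
    by (intro eq_vecI) auto
qed

lemma bound:
  assumes K: "K \<in> carrier_mat nx nx" and a: "a \<in> carrier_vec (nx*Nh)"
  shows "nrm1 (F_p nx Nh A B C CJ K *\<^sub>v a) \<le> Pb K * nrm1 (F_r nx Nh A B C L DA K *\<^sub>v a)"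
proof -
  define X where "X = F_a nx Nh (Ax K) B *\<^sub>v a"
  define U where "U = F_a nx Nh Ae B *\<^sub>v a"
  define W where "W = F_ex nx Nh Ae DA *\<^sub>v X"
  note d = dyn[OF K a X_def U_def W_def]
  have AxK: "Ax K \<in> carrier_mat nx nx" using Ax_carrier[OF K] .
  have Ae: "Ae \<in> carrier_mat nx nx" using Ae_carrier .
  have Xc: "X \<in> carrier_vec (nx*Nh)" unfolding X_def by (rule mult_mat_vec_carrier[OF F_a_carrier a])
  have Uc: "U \<in> carrier_vec (nx*Nh)" unfolding U_def by (rule mult_mat_vec_carrier[OF F_a_carrier a])
  have Wc: "W \<in> carrier_vec (nx*Nh)" unfolding W_def by (rule mult_mat_vec_carrier[OF F_ex_carrier Xc])
  have UWc: "U + W \<in> carrier_vec (nx*Nh)" using Uc Wc by simp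
  have Fr: "F_r nx Nh A B C L DA K *\<^sub>v a = kron_eye nx Nh C *\<^sub>v (U + W)"
    unfolding Fr_eq[OF K a] U_def W_def X_def ..
  have Fp: "F_p nx Nh A B C CJ K *\<^sub>v a = kron_eye nx Nh CJ *\<^sub>v X"
    unfolding Fp_eq[OF K a] X_def ..
  define R where "R = nrm1 (F_r nx Nh A B C L DA K *\<^sub>v a)"
  have R0: "0 \<le> R" unfolding R_def by (rule nrm1_nonneg)
  have Frc: "F_r nx Nh A B C L DA K *\<^sub>v a \<in> carrier_vec (nx*Nh)" unfolding Fr by (rule mult_mat_vec_carrier[OF kron_carrier UWc])
  have zb: "nrm1 (blk nx (U+W) k) \<le> mnorm Ci * R" if k: "k < Nh" for k
  proof -
    have "blk nx (U+W) k = Ci *\<^sub>v (C *\<^sub>v blk nx (U+W) k)"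
      by (rule left_inv_vec[symmetric, OF Ci(1) C Ci(2)]) simp
    also have "C *\<^sub>v blk nx (U+W) k = blk nx (F_r nx Nh A B C L DA K *\<^sub>v a) k"
      unfolding Fr by (rule kron_blk[symmetric, OF C UWc k])
    finally have "nrm1 (blk nx (U+W) k) \<le> mnorm Ci * nrm1 (blk nx (F_r nx Nh A B C L DA K *\<^sub>v a) k)"
      using nrm1_mult[OF Ci(1)] by simp
    also have "\<dots> \<le> mnorm Ci * R" unfolding R_def
      by (intro mult_left_mono nrm1_blk_le[OF Frc k] mnorm_nonneg)
    finally show ?thesis .
  qed
  define g where "g = mnorm (Ax K - DA)"
  define c2 where "c2 = (1 + mnorm Ae) * mnorm Ci"
  have g0: "0 \<le> g" unfolding g_def by (rule mnorm_nonneg)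
  have mAe: "0 \<le> mnorm Ae" by (rule mnorm_nonneg)
  have mCi: "0 \<le> mnorm Ci" by (rule mnorm_nonneg)
  have c20: "0 \<le> c2" unfolding c2_def using mAe mCi by simp
  have c2R: "mnorm Ci * R \<le> c2 * R" unfolding c2_def using mAe mCi R0
    by (simp add: algebra_simps mult_nonneg_nonneg)
  have xb: "k < Nh \<Longrightarrow> nrm1 (blk nx X k) \<le> c2 * (1+g)^k * R" for k
  proof (induct k)
    case 0
    have "nrm1 (blk nx X 0) \<le> mnorm Ci * R" unfolding d(1) using zb[OF Nh] .
    thus ?case using c2R by simp
  next
    case (Suc k)
    hence k: "k < Nh" by simp
    let ?x = "blk nx X k" and ?z = "blk nx (U+W) k" and ?z' = "blk nx (U+W) (Suc k)"
    have "nrm1 (blk nx X (Suc k)) \<le> nrm1 ((Ax K - DA) *\<^sub>v ?x) + nrm1 (?z' - Ae *\<^sub>v ?z)"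
      unfolding d(2)[OF Suc(2)] using AxK DA Ae by (intro nrm1_add[of _ nx]) (auto intro!: mult_mat_vec_carrier[of _ nx nx] minus_carrier_mat)
    also have "\<dots> \<le> g * nrm1 ?x + (nrm1 ?z' + mnorm Ae * nrm1 ?z)"
    proof (intro add_mono)
      show "nrm1 ((Ax K - DA) *\<^sub>v ?x) \<le> g * nrm1 ?x" unfolding g_def
        using AxK DA by (intro nrm1_mult[of _ nx nx]) auto
      have "nrm1 (?z' - Ae *\<^sub>v ?z) \<le> nrm1 ?z' + nrm1 (Ae *\<^sub>v ?z)"
        using Ae by (intro nrm1_minus[of _ nx]) auto
      also have "nrm1 (Ae *\<^sub>v ?z) \<le> mnorm Ae * nrm1 ?z" using Ae by (intro nrm1_mult[of _ nx nx]) auto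
      finally show "nrm1 (?z' - Ae *\<^sub>v ?z) \<le> nrm1 ?z' + mnorm Ae * nrm1 ?z" by simp
    qed
    also have "\<dots> \<le> g * (c2 * (1+g)^k * R) + (mnorm Ci * R + mnorm Ae * (mnorm Ci * R))"
      using Suc(1)[OF k] zb[OF Suc(2)] zb[OF k] g0 mAe
      by (intro add_mono mult_left_mono) auto
    also have "\<dots> = g * (c2 * (1+g)^k * R) + c2 * R" unfolding c2_def by (simp add: algebra_simps)
    also have "\<dots> \<le> g * (c2 * (1+g)^k * R) + c2 * (1+g)^k * R"
    proof -
      have "1 \<le> (1+g)^k" using g0 by simp
      hence "c2 * R * 1 \<le> c2 * R * (1+g)^k" using c20 R0 by (intro mult_left_mono) auto
      thus ?thesis by (simp add: algebra_simps)
    qed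
    also have "\<dots> = c2 * (1+g)^Suc k * R" by (simp add: algebra_simps)
    finally show ?case .
  qed
  have "nrm1 (F_p nx Nh A B C CJ K *\<^sub>v a) = (\<Sum>k<Nh. nrm1 (blk nx (kron_eye nx Nh CJ *\<^sub>v X) k))"
    unfolding Fp by (intro nrm1_blocks mult_mat_vec_carrier[OF kron_carrier Xc])
  also have "\<dots> = (\<Sum>k<Nh. nrm1 (CJ *\<^sub>v blk nx X k))"
    using kron_blk[OF CJ Xc] by simp
  also have "\<dots> \<le> (\<Sum>k<Nh. mnorm CJ * (c2 * (1+g)^(Nh-1) * R))"
  proof (intro sum_mono)
    fix k assume "k \<in> {..<Nh}"
    hence k: "k < Nh" by simp
    have "nrm1 (CJ *\<^sub>v blk nx X k) \<le> mnorm CJ * nrm1 (blk nx X k)" using CJ by (intro nrm1_mult) auto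
    also have "\<dots> \<le> mnorm CJ * (c2 * (1+g)^(Nh-1) * R)"
    proof (intro mult_left_mono mnorm_nonneg order_trans[OF xb[OF k]])
      have "(1+g)^k \<le> (1+g)^(Nh-1)" using g0 k by (intro power_increasing) auto
      thus "c2 * (1+g)^k * R \<le> c2 * (1+g)^(Nh-1) * R" using c20 R0
        by (intro mult_right_mono mult_left_mono) auto
    qed
    finally show "nrm1 (CJ *\<^sub>v blk nx X k) \<le> mnorm CJ * (c2 * (1+g)^(Nh-1) * R)" .
  qed
  also have "\<dots> = Pb K * R" unfolding Pb_def c2_def g_def by simp
  finally show ?thesis unfolding R_def .
qed

end

lemma mult_zero_vec': "M \<in> carrier_mat n m \<Longrightarrow> M *\<^sub>v 0\<^sub>v m = (0\<^sub>v n :: real vec)"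
  by (intro eq_vecI) auto

lemma nrm1_zero: assumes "nrm1 v = 0" shows "v = 0\<^sub>v (dim_vec v)"
proof (rule eq_vecI)
  fix i assume "i < dim_vec (0\<^sub>v (dim_vec v) :: real vec)"
  hence i: "i < dim_vec v" by simp
  have "\<bar>v $ i\<bar> \<le> 0" using abs_le_nrm1[OF i] assms by simp
  thus "v $ i = 0\<^sub>v (dim_vec v) $ i" using i by simp
qed simp

context sys begin

lemma Fp_carrier: "F_p nx Nh A B C CJ K \<in> carrier_mat (nx*Nh) (nx*Nh)"
  unfolding F_p_def by (rule mult_carrier_mat[where n="nx*Nh"]) auto

lemma Fr_carrier: "F_r nx Nh A B C L DA K \<in> carrier_mat (nx*Nh) (nx*Nh)"
  unfolding F_r_def by (rule mult_carrier_mat[where n="nx*Nh"], simp, rule add_carrier_mat, rule mult_carrier_mat[where n="nx*Nh"], auto)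

lemma Fp_inj:
  assumes K: "K \<in> carrier_mat nx nx" and a: "a \<in> carrier_vec (nx*Nh)"
    and z: "F_p nx Nh A B C CJ K *\<^sub>v a = 0\<^sub>v (nx*Nh)"
  shows "a = 0\<^sub>v (nx*Nh)"
proof -
  define X where "X = F_a nx Nh (Ax K) B *\<^sub>v a"
  define U where "U = F_a nx Nh Ae B *\<^sub>v a"
  define W where "W = F_ex nx Nh Ae DA *\<^sub>v X"
  note d = dyn[OF K a X_def U_def W_def]
  have AxK: "Ax K \<in> carrier_mat nx nx" using Ax_carrier[OF K] .
  have Xc: "X \<in> carrier_vec (nx*Nh)" unfolding X_def by (rule mult_mat_vec_carrier[OF F_a_carrier a])
  have Fp: "F_p nx Nh A B C CJ K *\<^sub>v a = kron_eye nx Nh CJ *\<^sub>v X"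
    unfolding Fp_eq[OF K a] X_def ..
  have x0: "blk nx X k = 0\<^sub>v nx" if k: "k < Nh" for k
  proof -
    have "CJ *\<^sub>v blk nx X k = 0\<^sub>v nx"
      using kron_blk[OF CJ Xc k] z blk_zero[OF k, of nx] unfolding Fp by simp
    hence "CJi *\<^sub>v (CJ *\<^sub>v blk nx X k) = 0\<^sub>v nx" using mult_zero_vec'[OF CJi(1)] by simp
    thus ?thesis using left_inv_vec[OF CJi(1) CJ CJi(2)] by simp
  qed
  have Bz: "v \<in> carrier_vec nx \<Longrightarrow> B *\<^sub>v v = 0\<^sub>v nx \<Longrightarrow> v = 0\<^sub>v nx" for v
    using left_inv_vec[OF Bi(1) B Bi(2), of v] mult_zero_vec'[OF Bi(1)] by simp
  have a0: "blk nx a k = 0\<^sub>v nx" if k: "k < Nh" for k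
  proof (cases k)
    case 0
    have "B *\<^sub>v blk nx a 0 = 0\<^sub>v nx" using trans[OF d(4)[symmetric] x0[OF Nh]] .
    thus ?thesis unfolding 0 by (rule Bz[rotated]) simp
  next
    case (Suc j)
    have kj: "Suc j < Nh" "j < Nh" using k Suc by auto
    have e: "0\<^sub>v nx = Ax K *\<^sub>v 0\<^sub>v nx + B *\<^sub>v blk nx a (Suc j)"
      using d(3)[OF kj(1)] by (simp only: x0[OF kj(1)] x0[OF kj(2)])
    have e2: "Ax K *\<^sub>v 0\<^sub>v nx = 0\<^sub>v nx" by (rule mult_zero_vec'[OF AxK])
    have e3: "0\<^sub>v nx + B *\<^sub>v blk nx a (Suc j) = B *\<^sub>v blk nx a (Suc j)"
      by (rule left_zero_vec) (rule mult_mat_vec_carrier[OF B blk_carrier])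
    have "B *\<^sub>v blk nx a (Suc j) = 0\<^sub>v nx" using e unfolding e2 e3 by (rule sym)
    thus ?thesis unfolding Suc by (rule Bz[rotated]) simp
  qed
  show ?thesis
  proof (rule vec_eq_blk[OF a zero_carrier_vec])
    fix k assume k: "k < Nh"
    show "blk nx a k = blk nx (0\<^sub>v (nx*Nh)) k" unfolding a0[OF k] blk_zero[OF k] ..
  qed
qed

lemma Fr_inj:
  assumes K: "K \<in> carrier_mat nx nx" and a: "a \<in> carrier_vec (nx*Nh)"
    and z: "F_r nx Nh A B C L DA K *\<^sub>v a = 0\<^sub>v (nx*Nh)"
  shows "a = 0\<^sub>v (nx*Nh)"
proof -
  have "nrm1 (F_r nx Nh A B C L DA K *\<^sub>v a) = 0" unfolding z nrm1_def by simp
  hence "nrm1 (F_p nx Nh A B C CJ K *\<^sub>v a) \<le> 0" using bound[OF K a] by simp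
  hence "nrm1 (F_p nx Nh A B C CJ K *\<^sub>v a) = 0" using nrm1_nonneg by (metis antisym)
  from nrm1_zero[OF this] have "F_p nx Nh A B C CJ K *\<^sub>v a = 0\<^sub>v (dim_vec (F_p nx Nh A B C CJ K *\<^sub>v a))" .
  also have "dim_vec (F_p nx Nh A B C CJ K *\<^sub>v a) = nx*Nh" using Fp_carrier[of K] by simp
  finally have "F_p nx Nh A B C CJ K *\<^sub>v a = 0\<^sub>v (nx*Nh)" .
  thus ?thesis by (rule Fp_inj[OF K a])
qed

lemma det_Fp: assumes K: "K \<in> carrier_mat nx nx" shows "det (F_p nx Nh A B C CJ K) \<noteq> 0"
  unfolding det_0_iff_vec_prod_zero[OF Fp_carrier] using Fp_inj[OF K] by auto

lemma det_Fr: assumes K: "K \<in> carrier_mat nx nx" shows "det (F_r nx Nh A B C L DA K) \<noteq> 0"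
  unfolding det_0_iff_vec_prod_zero[OF Fr_carrier] using Fr_inj[OF K] by auto

end

lemma sym_real_eig_real:
  fixes S :: "real mat" and c :: complex
  assumes S: "S \<in> carrier_mat n n" and sym: "\<And>i j. i < n \<Longrightarrow> j < n \<Longrightarrow> S $$ (i,j) = S $$ (j,i)"
    and ev: "eigenvalue (map_mat complex_of_real S) c"
  shows "Im c = 0"
proof -
  let ?S = "map_mat complex_of_real S"
  have Sc: "?S \<in> carrier_mat n n" using S by simp
  from ev obtain v where v: "v \<in> carrier_vec n" "v \<noteq> 0\<^sub>v n" "?S *\<^sub>v v = c \<cdot>\<^sub>v v"
    unfolding eigenvalue_def eigenvector_def using Sc by auto
  have row: "(\<Sum>j<n. of_real (S $$ (i,j)) * v $ j) = c * v $ i" if i: "i < n" for i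
  proof -
    have "(?S *\<^sub>v v) $ i = (c \<cdot>\<^sub>v v) $ i" using v(3) by simp
    thus ?thesis using i S v(1) by (simp add: scalar_prod_def atLeast0LessThan)
  qed
  define Y where "Y = (\<Sum>i<n. \<Sum>j<n. of_real (S $$ (i,j)) * cnj (v $ i) * v $ j)"
  define N where "N = (\<Sum>i<n. cnj (v $ i) * v $ i)"
  have YN: "Y = c * N"
  proof -
    have "Y = (\<Sum>i<n. cnj (v $ i) * (\<Sum>j<n. of_real (S $$ (i,j)) * v $ j))"
      unfolding Y_def by (simp add: sum_distrib_left mult.assoc mult.left_commute)
    also have "\<dots> = (\<Sum>i<n. cnj (v $ i) * (c * v $ i))" using row by simp
    also have "\<dots> = c * N" unfolding N_def by (simp add: sum_distrib_left mult.assoc mult.left_commute)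
    finally show ?thesis .
  qed
  have "cnj Y = (\<Sum>i<n. \<Sum>j<n. of_real (S $$ (i,j)) * v $ i * cnj (v $ j))"
    unfolding Y_def by (simp add: cnj_sum)
  also have "\<dots> = (\<Sum>j<n. \<Sum>i<n. of_real (S $$ (i,j)) * v $ i * cnj (v $ j))" by (rule sum.swap)
  also have "\<dots> = Y" unfolding Y_def using sym
    by (intro sum.cong refl) (simp add: mult.commute mult.left_commute)
  finally have cY: "cnj Y = Y" .
  have cz: "cnj z * z = complex_of_real ((Re z)^2 + (Im z)^2)" for z
    by (simp add: complex_eq_iff power2_eq_square)
  have NR: "N = of_real (\<Sum>i<n. (Re (v $ i))^2 + (Im (v $ i))^2)"
    unfolding N_def cz by simp
  have Npos: "0 < (\<Sum>i<n. (Re (v $ i))^2 + (Im (v $ i))^2)"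
  proof -
    from v(1,2) obtain i where i: "i < n" "v $ i \<noteq> 0" by (metis eq_vecI carrier_vecD index_zero_vec)
    have "0 < (Re (v $ i))^2 + (Im (v $ i))^2" using i(2) complex_eq_iff[of "v $ i" 0]
      by (auto simp: add_pos_nonneg add_nonneg_pos)
    also have "\<dots> \<le> (\<Sum>i<n. (Re (v $ i))^2 + (Im (v $ i))^2)"
      by (rule member_le_sum[where f="\<lambda>i. (Re (v $ i))^2 + (Im (v $ i))^2"]) (use i in auto)
    finally show ?thesis .
  qed
  have "Im Y = 0" using cY by (metis cnj.simps(2) complex.expand neg_equal_zero cnj.simps(1))
  hence "Im c * (\<Sum>i<n. (Re (v $ i))^2 + (Im (v $ i))^2) = 0" unfolding YN NR by simp
  thus ?thesis using Npos by simp
qed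

lemma map_poly_of_real_prod:
  "map_poly complex_of_real (\<Prod>a\<leftarrow>as. [:- a, 1:]) = (\<Prod>a\<leftarrow>as. [:- complex_of_real a, 1:])"
proof (induct as)
  case Nil thus ?case by simp
next
  case (Cons a as)
  have "map_poly complex_of_real ([:- a, 1:] * (\<Prod>a\<leftarrow>as. [:- a, 1:]))
     = map_poly complex_of_real [:- a, 1:] * map_poly complex_of_real (\<Prod>a\<leftarrow>as. [:- a, 1:])"
  proof -
    interpret h: map_poly_comm_ring_hom "complex_of_real" ..
    show ?thesis by (rule h.hom_mult)
  qed
  thus ?case using Cons by simp
qed

lemma map_poly_of_real_inj:
  assumes "map_poly complex_of_real p = map_poly complex_of_real q" shows "p = q"
proof (rule poly_eqI)
  fix i
  have "coeff (map_poly complex_of_real p) i = coeff (map_poly complex_of_real q) i" using assms by simp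
  thus "coeff p i = coeff q i" by (simp add: coeff_map_poly)
qed


lemma gram_sym: assumes M: "(M::real mat) \<in> carrier_mat n n" and i: "i < n" and j: "j < n"
  shows "(transpose_mat M * M) $$ (i,j) = (\<Sum>k<n. M $$ (k,i) * M $$ (k,j))"
  using M i j by (simp add: scalar_prod_def atLeast0LessThan)

lemma gram_carrier: "(M::real mat) \<in> carrier_mat n n \<Longrightarrow> transpose_mat M * M \<in> carrier_mat n n"
  by (rule mult_carrier_mat[where n=n]) auto

lemma gram_roots:
  fixes M :: "real mat"
  assumes M: "M \<in> carrier_mat n n"
  shows "\<exists>as. length as = n \<and> char_poly (transpose_mat M * M) = (\<Prod>a\<leftarrow>as. [:- a, 1:])"
proof -
  define S where "S = transpose_mat M * M"
  have S: "S \<in> carrier_mat n n" unfolding S_def by (rule gram_carrier[OF M])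
  let ?S = "map_mat complex_of_real S"
  have Sc: "?S \<in> carrier_mat n n" using S by simp
  obtain cs where cs: "char_poly ?S = (\<Prod>c\<leftarrow>cs. [:- c, 1:])" "length cs = n"
    using char_poly_factorized[OF Sc] by blast
  have sym: "S $$ (i,j) = S $$ (j,i)" if "i < n" "j < n" for i j
    unfolding S_def using gram_sym[OF M] that by (simp add: mult.commute)
  have real: "Im c = 0" if c: "c \<in> set cs" for c
  proof (rule sym_real_eig_real[OF S sym])
    show "eigenvalue ?S c" unfolding eigenvalue_root_char_poly[OF Sc] cs(1) poly_prod_list
      using c by (auto simp: prod_list_zero_iff)
  qed auto
  define as where "as = map Re cs"
  have "map (\<lambda>c. complex_of_real (Re c)) cs = cs"
    by (rule map_idI) (use real in \<open>auto simp: complex_eq_iff\<close>)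
  hence csas: "cs = map complex_of_real as" unfolding as_def by (simp add: o_def)
  have "map_poly complex_of_real (char_poly S) = char_poly ?S"
    by (rule of_real_hom.char_poly_hom[OF S, symmetric])
  also have "\<dots> = (\<Prod>a\<leftarrow>as. [:- complex_of_real a, 1:])" unfolding cs(1) csas by (simp add: o_def)
  also have "\<dots> = map_poly complex_of_real (\<Prod>a\<leftarrow>as. [:- a, 1:])" by (rule map_poly_of_real_prod[symmetric])
  finally have "char_poly S = (\<Prod>a\<leftarrow>as. [:- a, 1:])" by (rule map_poly_of_real_inj)
  moreover have "length as = n" unfolding as_def using cs(2) by simp
  ultimately show ?thesis unfolding S_def by blast
qed

lemma gram_roots_nonneg:
  fixes M :: "real mat"
  assumes M: "M \<in> carrier_mat n n"
    and cp: "char_poly (transpose_mat M * M) = (\<Prod>a\<leftarrow>as. [:- a, 1:])"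
    and a: "a \<in> set as"
  shows "0 \<le> a"
proof -
  define S where "S = transpose_mat M * M"
  have S: "S \<in> carrier_mat n n" unfolding S_def by (rule gram_carrier[OF M])
  have "eigenvalue S a" unfolding eigenvalue_root_char_poly[OF S] unfolding S_def cp poly_prod_list
    using a by (auto simp: prod_list_zero_iff)
  then obtain v where v: "v \<in> carrier_vec n" "v \<noteq> 0\<^sub>v n" "S *\<^sub>v v = a \<cdot>\<^sub>v v"
    unfolding eigenvalue_def eigenvector_def using S by auto
  have row: "(\<Sum>j<n. S $$ (i,j) * v $ j) = a * v $ i" if i: "i < n" for i
  proof -
    have "(S *\<^sub>v v) $ i = (a \<cdot>\<^sub>v v) $ i" using v(3) by simp
    thus ?thesis using i S v(1) by (simp add: scalar_prod_def atLeast0LessThan)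
  qed
  have "(\<Sum>i<n. v $ i * (\<Sum>j<n. S $$ (i,j) * v $ j))
      = (\<Sum>i<n. \<Sum>j<n. \<Sum>k<n. (M $$ (k,i) * v $ i) * (M $$ (k,j) * v $ j))"
  proof (intro sum.cong refl)
    fix i assume i: "i \<in> {..<n}"
    have "v $ i * (\<Sum>j<n. S $$ (i,j) * v $ j) = (\<Sum>j<n. v $ i * (S $$ (i,j) * v $ j))"
      by (simp add: sum_distrib_left)
    also have "\<dots> = (\<Sum>j<n. \<Sum>k<n. (M $$ (k,i) * v $ i) * (M $$ (k,j) * v $ j))"
    proof (intro sum.cong refl)
      fix j assume j: "j \<in> {..<n}"
      show "v $ i * (S $$ (i,j) * v $ j) = (\<Sum>k<n. (M $$ (k,i) * v $ i) * (M $$ (k,j) * v $ j))"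
      proof -
        have "S $$ (i,j) = (\<Sum>k<n. M $$ (k,i) * M $$ (k,j))" unfolding S_def using gram_sym[OF M] i j by simp
        thus ?thesis by (simp add: sum_distrib_left sum_distrib_right mult_ac)
      qed
    qed
    finally show "v $ i * (\<Sum>j<n. S $$ (i,j) * v $ j) = (\<Sum>j<n. \<Sum>k<n. (M $$ (k,i) * v $ i) * (M $$ (k,j) * v $ j))" .
  qed
  also have "\<dots> = (\<Sum>i<n. \<Sum>k<n. \<Sum>j<n. (M $$ (k,i) * v $ i) * (M $$ (k,j) * v $ j))"
    by (rule sum.cong[OF refl], rule sum.swap)
  also have "\<dots> = (\<Sum>k<n. \<Sum>i<n. \<Sum>j<n. (M $$ (k,i) * v $ i) * (M $$ (k,j) * v $ j))"
    by (rule sum.swap)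
  also have "\<dots> = (\<Sum>k<n. (\<Sum>i<n. M $$ (k,i) * v $ i)^2)"
    by (simp add: power2_eq_square sum_product)
  also have "\<dots> \<ge> 0" by (intro sum_nonneg) auto
  finally have ge: "0 \<le> (\<Sum>i<n. v $ i * (\<Sum>j<n. S $$ (i,j) * v $ j))" .
  have eq: "(\<Sum>i<n. v $ i * (\<Sum>j<n. S $$ (i,j) * v $ j)) = a * (\<Sum>i<n. (v $ i)^2)"
    using row by (simp add: sum_distrib_left power2_eq_square mult_ac)
  have pos: "0 < (\<Sum>i<n. (v $ i)^2)"
  proof -
    from v(1,2) obtain i where i: "i < n" "v $ i \<noteq> 0" by (metis eq_vecI carrier_vecD index_zero_vec)
    have "0 < (v $ i)^2" using i by simp
    also have "\<dots> \<le> (\<Sum>i<n. (v $ i)^2)"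
      by (rule member_le_sum[where f="\<lambda>i. (v $ i)^2"]) (use i in auto)
    finally show ?thesis .
  qed
  from ge eq pos show ?thesis by (simp add: zero_le_mult_iff)
qed

lemma prod_list_uminus: "prod_list (map (\<lambda>a. - a) as) = (-1::real)^length as * prod_list as"
  by (induct as) auto

lemma gram_prod:
  fixes M :: "real mat"
  assumes M: "M \<in> carrier_mat n n"
    and cp: "char_poly (transpose_mat M * M) = (\<Prod>a\<leftarrow>as. [:- a, 1:])"
    and len: "length as = n"
  shows "prod_list as = (det M)^2"
proof -
  define S where "S = transpose_mat M * M"
  have S: "S \<in> carrier_mat n n" unfolding S_def by (rule gram_carrier[OF M])
  have cm: "char_matrix S 0 = S" unfolding char_matrix_def using S by (intro eq_matI) auto
  have mS: "- S = (-1) \<cdot>\<^sub>m S" using S by (intro eq_matI) auto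
  have "poly (char_poly S) 0 = det (- S)" unfolding char_poly_matrix[OF S] cm ..
  also have "\<dots> = (-1)^n * det S" unfolding mS det_smult using S by simp
  finally have e1: "poly (char_poly S) 0 = (-1)^n * det S" .
  have "poly (char_poly S) 0 = prod_list (map (\<lambda>a. - a) as)"
    unfolding S_def cp poly_prod_list by (simp add: o_def)
  also have "\<dots> = (-1)^n * prod_list as" unfolding prod_list_uminus len ..
  finally have "prod_list as = det S" using e1 by simp
  also have "det S = det (transpose_mat M) * det M" unfolding S_def
    by (rule det_mult[of _ n]) (use M in auto)
  also have "\<dots> = (det M)^2" using det_transpose[OF M] by (simp add: power2_eq_square)
  finally show ?thesis .
qed

lemma det_bound:
  fixes X :: "real mat"
  assumes X: "X \<in> carrier_mat n n" and m: "\<And>i j. i < n \<Longrightarrow> j < n \<Longrightarrow> \<bar>X $$ (i,j)\<bar> \<le> m"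
  shows "\<bar>det X\<bar> \<le> fact n * m^n"
proof -
  have m0: "0 \<le> m" if "0 < n" using m[of 0 0] that by auto
  have "\<bar>det X\<bar> \<le> (\<Sum>p\<in>{p. p permutes {0..<n}}. \<bar>signof p * (\<Prod>i=0..<n. X $$ (i, p i))\<bar>)"
    unfolding det_def'[OF X] by (rule sum_abs)
  also have "\<dots> \<le> (\<Sum>p\<in>{p. p permutes {0..<n}}. m^n)"
  proof (intro sum_mono)
    fix p assume "p \<in> {p. p permutes {0..<n}}"
    hence p: "p permutes {0..<n}" by simp
    have s: "\<bar>signof p :: real\<bar> = 1" by (simp add: sign_def)
    have "\<bar>(\<Prod>i=0..<n. X $$ (i, p i))\<bar> = (\<Prod>i=0..<n. \<bar>X $$ (i, p i)\<bar>)" by (rule abs_prod)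
    also have "\<dots> \<le> (\<Prod>i=0..<n. m)"
      by (intro prod_mono) (use p m permutes_in_image[OF p] in auto)
    also have "\<dots> = m^n" by simp
    finally show "\<bar>signof p * (\<Prod>i=0..<n. X $$ (i, p i))\<bar> \<le> m^n" by (simp add: abs_mult s)
  qed
  also have "\<dots> = fact n * m^n" by (simp add: card_permutations)
  finally show ?thesis .
qed

lemma minv_prop:
  fixes X :: "real mat"
  assumes X: "X \<in> carrier_mat n n" and d: "det X \<noteq> 0"
  shows "minv X \<in> carrier_mat n n \<and> X * minv X = 1\<^sub>m n \<and> minv X * X = 1\<^sub>m n"
proof -
  have u: "X \<in> Units (ring_mat TYPE(real) n n)" by (rule det_non_zero_imp_unit[OF X d])
  have ex: "\<exists>N. N \<in> carrier_mat n n \<and> X * N = 1\<^sub>m n \<and> N * X = 1\<^sub>m n"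
  proof (cases "mat_inverse X")
    case None
    with mat_inverse(1)[OF X None, of n] u show ?thesis by auto
  next
    case (Some N)
    from mat_inverse(2)[OF X Some] show ?thesis by auto
  qed
  have "dim_row X = n" using X by simp
  thus ?thesis unfolding minv_def using someI_ex[OF ex] by simp
qed

lemma prod_list_le_pow:
  assumes "\<And>x. x \<in> set xs \<Longrightarrow> 0 \<le> x \<and> x \<le> (m::real)"
  shows "prod_list xs \<le> m ^ length xs"
  using assms
proof (induct xs)
  case Nil thus ?case by simp
next
  case (Cons x xs)
  have x: "0 \<le> x" "x \<le> m" using Cons(2) by auto
  have "prod_list xs \<le> m ^ length xs" using Cons by auto
  moreover have "0 \<le> prod_list xs" using Cons(2) by (intro prod_list_nonneg) auto
  ultimately show ?case using x by (simp add: mult_mono)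
qed

lemma sigma_sum_bound:
  fixes M :: "real mat"
  assumes M: "M \<in> carrier_mat n n" and n: "2 \<le> n"
  shows "sqrt (min 1 ((det M)^2)) \<le> (\<Sum>i = 2..n. sigma M i)"
    and "0 \<le> (\<Sum>i = 2..n. sigma M i)"
proof -
  define as where "as = (SOME as. length as = dim_col M \<and>
      char_poly (transpose_mat M * M) = (\<Prod>a\<leftarrow>as. [:- a, 1:]))"
  have ex: "\<exists>as. length as = dim_col M \<and> char_poly (transpose_mat M * M) = (\<Prod>a\<leftarrow>as. [:- a, 1:])"
    using gram_roots[OF M] M by simp
  have as: "length as = n" "char_poly (transpose_mat M * M) = (\<Prod>a\<leftarrow>as. [:- a, 1:])"
    using someI_ex[OF ex] M unfolding as_def[symmetric] by auto
  have nn: "\<And>a. a \<in> set as \<Longrightarrow> 0 \<le> a" using gram_roots_nonneg[OF M as(2)] by blast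
  have pr: "prod_list as = (det M)^2" by (rule gram_prod[OF M as(2) as(1)])
  define L where "L = sing_vals M"
  have L: "L = sort (map sqrt as)" unfolding L_def sing_vals_def as_def ..
  have lenL: "length L = n" unfolding L using as by simp
  have sortL: "sorted L" unfolding L by simp
  have Lnn: "\<And>x. x \<in> set L \<Longrightarrow> 0 \<le> x" unfolding L using nn by auto
  have sig: "sigma M i = L ! (i - 1)" for i unfolding sigma_def L_def ..
  have sig0: "0 \<le> sigma M i" if "i \<in> {2..n}" for i
    unfolding sig using that lenL by (intro Lnn nth_mem) auto
  show "0 \<le> (\<Sum>i = 2..n. sigma M i)" by (intro sum_nonneg sig0)
  have ne: "as \<noteq> []" using as(1) n by auto
  define amax where "amax = Max (set as)"
  have amax: "amax \<in> set as" "\<And>a. a \<in> set as \<Longrightarrow> a \<le> amax" unfolding amax_def using ne by auto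
  have a0: "0 \<le> amax" using nn amax(1) by auto
  have "(det M)^2 \<le> amax ^ n" unfolding pr[symmetric] as(1)[symmetric]
    by (rule prod_list_le_pow) (use nn amax in auto)
  have mn: "min 1 ((det M)^2) \<le> amax"
  proof (cases "amax \<le> 1")
    case True
    have "amax ^ n \<le> amax ^ 1" using True a0 n by (intro power_decreasing) auto
    thus ?thesis using \<open>(det M)^2 \<le> amax ^ n\<close> by simp
  next
    case False thus ?thesis by simp
  qed
  have "sqrt amax \<in> set L" unfolding L using amax(1) by simp
  then obtain j where j: "j < length L" "L ! j = sqrt amax" by (auto simp: in_set_conv_nth)
  have "sqrt (min 1 ((det M)^2)) \<le> sqrt amax" using mn by simp
  also have "\<dots> \<le> L ! (n - 1)" unfolding j(2)[symmetric]
    by (rule sorted_nth_mono[OF sortL]) (use j lenL in auto)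
  also have "\<dots> = sigma M n" unfolding sig ..
  also have "\<dots> \<le> (\<Sum>i = 2..n. sigma M i)"
    by (rule member_le_sum) (use n sig0 in auto)
  finally show "sqrt (min 1 ((det M)^2)) \<le> (\<Sum>i = 2..n. sigma M i)" .
qed

lemma frob_entry: assumes K: "K \<in> carrier_mat n m" and i: "i < n" and j: "j < m"
  shows "\<bar>K $$ (i,j)\<bar> \<le> frob_norm K"
proof -
  have "(K $$ (i,j))^2 \<le> (\<Sum>j<m. (K $$ (i,j))^2)"
    by (rule member_le_sum[where f="\<lambda>j. (K $$ (i,j))^2"]) (use j in auto)
  also have "\<dots> \<le> (\<Sum>i<n. \<Sum>j<m. (K $$ (i,j))^2)"
    by (rule member_le_sum[where f="\<lambda>i. \<Sum>j<m. (K $$ (i,j))^2"]) (use i in \<open>auto intro: sum_nonneg\<close>)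
  finally have "sqrt ((K $$ (i,j))^2) \<le> sqrt (\<Sum>i<n. \<Sum>j<m. (K $$ (i,j))^2)" by (rule real_sqrt_le_mono)
  thus ?thesis unfolding frob_norm_def using K by simp
qed

lemma frob_nonneg: "0 \<le> frob_norm K" unfolding frob_norm_def by (auto intro!: sum_nonneg)

lemma mnorm_frob: assumes K: "K \<in> carrier_mat n m"
  shows "mnorm K \<le> real (n*m) * frob_norm K"
proof -
  have "mnorm K = (\<Sum>i<n. \<Sum>j<m. \<bar>K $$ (i,j)\<bar>)" unfolding mnorm_def using K by simp
  also have "\<dots> \<le> (\<Sum>i<n. \<Sum>j<m. frob_norm K)" by (intro sum_mono frob_entry[OF K]) auto
  also have "\<dots> = real (n*m) * frob_norm K" by simp
  finally show ?thesis .
qed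

lemma nrm1_unit: "j < n \<Longrightarrow> nrm1 (unit_vec n j) = 1"
  unfolding nrm1_def by (simp add: if_distrib[of abs] cong: if_cong)

context sys begin

definition P0 where "P0 = Nh * mnorm CJ * ((1 + mnorm Ae) * mnorm Ci)"
definition gam where "gam = 1 + mnorm A + mnorm DA + mnorm B * real (nx*nx) * mnorm C"

lemma P0_nonneg: "0 \<le> P0" unfolding P0_def by (intro mult_nonneg_nonneg) (auto intro: mnorm_nonneg add_nonneg_nonneg)
lemma gam_ge1: "1 \<le> gam" unfolding gam_def using mnorm_nonneg[of A] mnorm_nonneg[of DA] mnorm_nonneg[of B] mnorm_nonneg[of C]
  by (simp add: mult_nonneg_nonneg)

lemma Pb_bound: assumes K: "K \<in> carrier_mat nx nx"
  shows "Pb K \<le> P0 * gam^(Nh-1) * (1 + frob_norm K)^(Nh-1)"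
proof -
  let ?k = "frob_norm K"
  have k0: "0 \<le> ?k" by (rule frob_nonneg)
  have BK: "B * K \<in> carrier_mat nx nx" using B K by simp
  have "mnorm (B * K * C) \<le> mnorm (B * K) * mnorm C" by (rule mnorm_mult[OF BK C])
  also have "\<dots> \<le> (mnorm B * mnorm K) * mnorm C"
    by (intro mult_right_mono mnorm_mult[OF B K] mnorm_nonneg)
  also have "\<dots> \<le> (mnorm B * (real (nx*nx) * ?k)) * mnorm C"
    by (intro mult_right_mono mult_left_mono mnorm_frob[OF K] mnorm_nonneg)
  finally have bkc: "mnorm (B * K * C) \<le> mnorm B * real (nx*nx) * mnorm C * ?k" by (simp add: mult_ac)
  have "mnorm (Ax K - DA) \<le> mnorm (Ax K) + mnorm DA" using Ax_carrier[OF K] DA by (rule mnorm_minus)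
  also have "mnorm (Ax K) \<le> mnorm A + mnorm (B * K * C)" unfolding Ax_def using A BK C
    by (intro mnorm_add) auto
  finally have "1 + mnorm (Ax K - DA) \<le> 1 + mnorm A + mnorm DA + mnorm B * real (nx*nx) * mnorm C * ?k"
    using bkc by simp
  also have "\<dots> \<le> gam * (1 + ?k)" unfolding gam_def
    using mnorm_nonneg[of A] mnorm_nonneg[of DA] mnorm_nonneg[of B] mnorm_nonneg[of C] k0
    by (simp add: algebra_simps mult_nonneg_nonneg)
  finally have g: "1 + mnorm (Ax K - DA) \<le> gam * (1 + ?k)" .
  have "(1 + mnorm (Ax K - DA))^(Nh-1) \<le> (gam * (1 + ?k))^(Nh-1)"
    by (rule power_mono[OF g]) (use mnorm_nonneg[of "Ax K - DA"] in simp)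
  hence "P0 * (1 + mnorm (Ax K - DA))^(Nh-1) \<le> P0 * (gam * (1 + ?k))^(Nh-1)"
    by (rule mult_left_mono[OF _ P0_nonneg])
  thus ?thesis unfolding Pb_def P0_def by (simp add: power_mult_distrib mult_ac)
qed

lemma kappa:
  assumes K: "K \<in> carrier_mat nx nx"
  defines "kap \<equiv> F_p nx Nh A B C CJ K * minv (F_r nx Nh A B C L DA K)"
  shows "kap \<in> carrier_mat (nx*Nh) (nx*Nh)" "det kap \<noteq> 0"
    "\<And>i j. i < nx*Nh \<Longrightarrow> j < nx*Nh \<Longrightarrow> \<bar>kap $$ (i,j)\<bar> \<le> Pb K"
proof -
  let ?n = "nx*Nh"
  let ?Fr = "F_r nx Nh A B C L DA K" and ?Fp = "F_p nx Nh A B C CJ K"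
  define Fri where "Fri = minv ?Fr"
  have Fri: "Fri \<in> carrier_mat ?n ?n" "?Fr * Fri = 1\<^sub>m ?n" "Fri * ?Fr = 1\<^sub>m ?n"
    using minv_prop[OF Fr_carrier det_Fr[OF K]] unfolding Fri_def by auto
  have "det ?Fr * det Fri = 1" using det_mult[OF Fr_carrier[of K] Fri(1)] Fri(2) by simp
  hence dFri: "det Fri \<noteq> 0" by auto
  have kap: "kap = ?Fp * Fri" unfolding kap_def Fri_def ..
  show kc: "kap \<in> carrier_mat ?n ?n" unfolding kap using Fp_carrier Fri(1) by (rule mult_carrier_mat)
  show "det kap \<noteq> 0" unfolding kap det_mult[OF Fp_carrier Fri(1)] using det_Fp[OF K] dFri by simp
  fix i j assume i: "i < ?n" and j: "j < ?n"
  define e where "e = (unit_vec ?n j :: real vec)"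
  have ec: "e \<in> carrier_vec ?n" unfolding e_def by simp
  define b where "b = Fri *\<^sub>v e"
  have bc: "b \<in> carrier_vec ?n" unfolding b_def using Fri(1) ec by simp
  have Frb: "?Fr *\<^sub>v b = e" unfolding b_def
    using assoc_mult_mat_vec[OF Fr_carrier Fri(1) ec, symmetric] Fri(2) ec by simp
  have kape: "kap *\<^sub>v e = ?Fp *\<^sub>v b" unfolding kap b_def
    by (rule assoc_mult_mat_vec[OF Fp_carrier Fri(1) ec])
  have "kap $$ (i,j) = (kap *\<^sub>v e) $ i" unfolding e_def using kc i j by simp
  moreover have "\<bar>(kap *\<^sub>v e) $ i\<bar> \<le> nrm1 (kap *\<^sub>v e)" by (rule abs_le_nrm1) (use kc i in simp)
  ultimately have "\<bar>kap $$ (i,j)\<bar> \<le> nrm1 (kap *\<^sub>v e)" by simp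
  also have "\<dots> \<le> Pb K * nrm1 (?Fr *\<^sub>v b)" unfolding kape by (rule bound[OF K bc])
  also have "nrm1 (?Fr *\<^sub>v b) = 1" unfolding Frb e_def using j by (rule nrm1_unit)
  finally show "\<bar>kap $$ (i,j)\<bar> \<le> Pb K" by simp
qed

lemma q_bound:
  assumes K: "K \<in> carrier_mat nx nx" and e: "0 \<le> eps_r"
  shows "q_worst nx Nh eps_r A B C CJ L DA K \<le> eps_r * real (nx*Nh) * (Pb K)^2"
  unfolding q_worst_def
proof (rule cSup_least)
  let ?n = "nx*Nh"
  let ?Fr = "F_r nx Nh A B C L DA K" and ?Fp = "F_p nx Nh A B C CJ K"
  have "?Fr *\<^sub>v 0\<^sub>v ?n = 0\<^sub>v ?n" by (rule mult_zero_vec'[OF Fr_carrier])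
  hence "sqnorm (?Fr *\<^sub>v 0\<^sub>v ?n) \<le> eps_r" using e unfolding sqnorm_def by simp
  hence "sqnorm (?Fp *\<^sub>v 0\<^sub>v ?n) \<in> {sqnorm (?Fp *\<^sub>v a) | a. a \<in> carrier_vec ?n \<and> sqnorm (?Fr *\<^sub>v a) \<le> eps_r}"
    by (intro CollectI exI[of _ "0\<^sub>v ?n"]) simp
  thus "{sqnorm (?Fp *\<^sub>v a) | a. a \<in> carrier_vec ?n \<and> sqnorm (?Fr *\<^sub>v a) \<le> eps_r} \<noteq> {}"
    by (metis empty_iff)
  fix x assume "x \<in> {sqnorm (?Fp *\<^sub>v a) | a. a \<in> carrier_vec ?n \<and> sqnorm (?Fr *\<^sub>v a) \<le> eps_r}"
  then obtain a where a: "a \<in> carrier_vec ?n" "sqnorm (?Fr *\<^sub>v a) \<le> eps_r" and x: "x = sqnorm (?Fp *\<^sub>v a)"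
    by blast
  have P0': "0 \<le> Pb K" by (rule Pb_nonneg)
  have "x \<le> (nrm1 (?Fp *\<^sub>v a))^2" unfolding x by (rule sqnorm_le_nrm1)
  also have "\<dots> \<le> (Pb K * nrm1 (?Fr *\<^sub>v a))^2"
    by (rule power_mono[OF bound[OF K a(1)] nrm1_nonneg])
  also have "\<dots> = (Pb K)^2 * (nrm1 (?Fr *\<^sub>v a))^2" by (simp add: power_mult_distrib)
  also have "\<dots> \<le> (Pb K)^2 * (real ?n * sqnorm (?Fr *\<^sub>v a))"
  proof (rule mult_left_mono)
    show "(nrm1 (?Fr *\<^sub>v a))^2 \<le> real ?n * sqnorm (?Fr *\<^sub>v a)"
    proof -
      have "dim_vec (?Fr *\<^sub>v a) = ?n" using Fr_carrier[of K] by simp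
      thus ?thesis using nrm1_sq_le[of "?Fr *\<^sub>v a"] by simp
    qed
  qed simp
  also have "\<dots> \<le> (Pb K)^2 * (real ?n * eps_r)"
    by (intro mult_left_mono a(2)) auto
  finally show "x \<le> eps_r * real ?n * (Pb K)^2" by (simp add: mult_ac)
qed

end

theorem lemma2:
  fixes nx Nh :: nat and eps_r eta :: real
    and A B C CJ L DA :: "real mat"
  assumes "0 < nx" and "0 < Nh" and "0 < eps_r" and "0 < eta"
    and "A \<in> carrier_mat nx nx" and "B \<in> carrier_mat nx nx" and "C \<in> carrier_mat nx nx"
    and "CJ \<in> carrier_mat nx nx" and "L \<in> carrier_mat nx nx" and "DA \<in> carrier_mat nx nx"
    and "invertible_mat B" and "invertible_mat C" and "invertible_mat CJ"
  shows "\<exists>\<mu>::real. \<forall>K \<in> carrier_mat nx nx.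
     (let kappa = F_p nx Nh A B C CJ K * minv (F_r nx Nh A B C L DA K);
          qbar = eta * (frob_norm K)\<^sup>2 + (\<Sum>i = 2..nx * Nh. sigma (minv kappa) i);
          f = nx * Nh - 1
      in q_worst nx Nh eps_r A B C CJ L DA K \<le> \<mu> * qbar ^ f)"
proof -
  interpret sys nx Nh A B C CJ L DA by unfold_locales (use assms in auto)
  let ?n = "nx*Nh"
  define P1 where "P1 = P0 * gam^(Nh-1)"
  have P1: "0 \<le> P1" unfolding P1_def using P0_nonneg gam_ge1 by simp
  have eps: "0 \<le> eps_r" using assms(3) by simp
  have qb: "q_worst nx Nh eps_r A B C CJ L DA K \<le> eps_r * ?n * (P1 * (1 + frob_norm K)^(Nh-1))^2"
    if K: "K \<in> carrier_mat nx nx" for K :: "real mat"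
  proof -
    have "Pb K \<le> P1 * (1 + frob_norm K)^(Nh-1)" using Pb_bound[OF K] unfolding P1_def by (simp add: mult.assoc)
    hence "(Pb K)^2 \<le> (P1 * (1 + frob_norm K)^(Nh-1))^2" by (rule power_mono[OF _ Pb_nonneg])
    hence "eps_r * ?n * (Pb K)^2 \<le> eps_r * ?n * (P1 * (1 + frob_norm K)^(Nh-1))^2"
      by (rule mult_left_mono) (use eps in simp)
    thus ?thesis using q_bound[OF K eps] by linarith
  qed
  have n0: "0 < ?n" using assms(1,2) by simp
  show ?thesis
  proof (cases "?n = 1")
    case True
    hence Nh1: "Nh = 1" and nx1: "nx = 1" by simp_all
    show ?thesis
    proof (rule exI[of _ "eps_r * ?n * P1^2"], intro ballI)
      fix K :: "real mat" assume K: "K \<in> carrier_mat nx nx"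
      show "let kappa = F_p nx Nh A B C CJ K * minv (F_r nx Nh A B C L DA K);
          qbar = eta * (frob_norm K)\<^sup>2 + (\<Sum>i = 2..nx * Nh. sigma (minv kappa) i);
          f = nx * Nh - 1
      in q_worst nx Nh eps_r A B C CJ L DA K \<le> eps_r * ?n * P1^2 * qbar ^ f"
        unfolding Let_def True using qb[OF K] Nh1 nx1 by simp
    qed
  next
    case False
    hence n2: "2 \<le> ?n" using n0 by linarith
    define f where "f = ?n - 1"
    have Nhf: "Nh - 1 \<le> f" unfolding f_def using assms(1) by (simp add: diff_le_mono)
    define P2 where "P2 = P1 * 2^(Nh-1)"
    define D1 where "D1 = fact ?n * P2^?n + 1"
    define s0 where "s0 = sqrt (min 1 (1 / D1^2))"
    define del where "del = min (eta/2) (s0/2)"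
    have P2: "0 \<le> P2" unfolding P2_def using P1 by simp
    have D1: "0 < D1" unfolding D1_def using P2 by (simp add: add_nonneg_pos)
    have s0: "0 < s0" unfolding s0_def using D1 by simp
    have del: "0 < del" unfolding del_def using s0 assms(4) by simp
    define mu where "mu = eps_r * ?n * P1^2 * 2^f / del^f"
    show ?thesis
    proof (rule exI[of _ mu], intro ballI)
      fix K :: "real mat" assume K: "K \<in> carrier_mat nx nx"
      define kap where "kap = F_p nx Nh A B C CJ K * minv (F_r nx Nh A B C L DA K)"
      define Mk where "Mk = minv kap"
      define k where "k = frob_norm K"
      define S where "S = (\<Sum>i = 2..?n. sigma Mk i)"
      define qbr where "qbr = eta * k^2 + S"
      note kp = kappa[OF K, folded kap_def]
      have Mk: "Mk \<in> carrier_mat ?n ?n" "kap * Mk = 1\<^sub>m ?n"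
        using minv_prop[OF kp(1) kp(2)] unfolding Mk_def by auto
      have dMk: "det kap * det Mk = 1" using det_mult[OF kp(1) Mk(1)] Mk(2) by simp
      have S0: "0 \<le> S" and S1: "sqrt (min 1 ((det Mk)^2)) \<le> S"
        unfolding S_def using sigma_sum_bound[OF Mk(1) n2] by auto
      have k0: "0 \<le> k" unfolding k_def by (rule frob_nonneg)
      have qbd: "del * (1 + k^2) \<le> qbr"
      proof (cases "1 \<le> k")
        case True
        have k2: "1 \<le> k^2" using True by (simp add: one_le_power)
        have "del * (1 + k^2) \<le> (eta/2) * (1 + k^2)"
          by (rule mult_right_mono) (auto simp: del_def)
        also have "\<dots> \<le> eta * k^2"
        proof -
          have "eta * 1 \<le> eta * k^2" using k2 assms(4) by (intro mult_left_mono) auto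
          thus ?thesis by (simp add: algebra_simps)
        qed
        also have "\<dots> \<le> qbr" unfolding qbr_def using S0 by simp
        finally show ?thesis .
      next
        case False
        hence k1: "k < 1" by simp
        have "Pb K \<le> P1 * (1 + k)^(Nh-1)" using Pb_bound[OF K] unfolding P1_def k_def by (simp add: mult.assoc)
        also have "\<dots> \<le> P2" unfolding P2_def
          by (intro mult_left_mono power_mono P1) (use k0 k1 in auto)
        finally have PP: "Pb K \<le> P2" .
        have "\<bar>det kap\<bar> \<le> fact ?n * P2^?n"
          by (rule det_bound[OF kp(1)]) (use kp(3) PP in \<open>blast intro: order_trans\<close>)
        hence dk: "\<bar>det kap\<bar> \<le> D1" unfolding D1_def by simp
        have dk0: "0 < (det kap)^2" using kp(2) by simp
        have "(det kap)^2 \<le> D1^2" using dk power_mono[OF dk, of 2] by simp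
        hence "1 / D1^2 \<le> 1 / (det kap)^2" using dk0 D1 by (intro divide_left_mono) (auto intro: mult_pos_pos)
        also have "1 / (det kap)^2 = (det Mk)^2" using dMk kp(2) by (simp add: field_simps power2_eq_square)
        finally have "s0 \<le> sqrt (min 1 ((det Mk)^2))" unfolding s0_def by simp
        hence sS: "s0 \<le> S" using S1 by linarith
        have "del * (1 + k^2) \<le> (s0/2) * (1 + k^2)"
          by (rule mult_right_mono) (auto simp: del_def)
        also have "\<dots> \<le> (s0/2) * 2"
        proof (rule mult_left_mono)
          have "k^2 \<le> 1" using k0 k1 by (simp add: power_le_one)
          thus "1 + k^2 \<le> 2" by simp
        qed (use s0 in simp)
        also have "\<dots> \<le> qbr" proof -
          have "0 \<le> eta * k^2" using assms(4) by simp
          thus ?thesis unfolding qbr_def using sS by simp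
        qed
        finally show ?thesis .
      qed
      have le1: "1 + k^2 \<le> qbr / del" using qbd del by (simp add: pos_le_divide_eq mult.commute)
      have "q_worst nx Nh eps_r A B C CJ L DA K \<le> eps_r * ?n * (P1 * (1 + k)^(Nh-1))^2"
        unfolding k_def by (rule qb[OF K])
      also have "\<dots> \<le> eps_r * ?n * (P1 * (1 + k)^f)^2"
      proof (intro mult_left_mono power_mono)
        show "(1 + k)^(Nh-1) \<le> (1 + k)^f" by (rule power_increasing[OF Nhf]) (use k0 in simp)
      qed (use P1 k0 eps in auto)
      also have "\<dots> = eps_r * ?n * P1^2 * ((1 + k)^2)^f"
        by (simp add: power_mult_distrib power_mult[symmetric] mult.commute)
      also have "\<dots> \<le> eps_r * ?n * P1^2 * (2 * (1 + k^2))^f"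
      proof (intro mult_left_mono power_mono)
        have "0 \<le> (k - 1)^2" by simp
        thus "(1 + k)^2 \<le> 2 * (1 + k^2)" by (simp add: power2_eq_square algebra_simps)
      qed (use eps in auto)
      also have "\<dots> = eps_r * ?n * P1^2 * 2^f * (1 + k^2)^f" by (simp only: power_mult_distrib mult_ac)
      also have "\<dots> \<le> eps_r * ?n * P1^2 * 2^f * (qbr / del)^f"
        by (intro mult_left_mono power_mono le1) (use eps k0 in auto)
      also have "\<dots> = mu * qbr^f" unfolding mu_def by (simp add: power_divide)
      finally have main: "q_worst nx Nh eps_r A B C CJ L DA K \<le> mu * qbr^f" .
      show "let kappa = F_p nx Nh A B C CJ K * minv (F_r nx Nh A B C L DA K);
          qbar = eta * (frob_norm K)\<^sup>2 + (\<Sum>i = 2..nx * Nh. sigma (minv kappa) i);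
          f = nx * Nh - 1
      in q_worst nx Nh eps_r A B C CJ L DA K \<le> mu * qbar ^ f"
        using main unfolding Let_def qbr_def S_def Mk_def kap_def k_def f_def .
    qed
  qed
qed

end
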